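(* Let $d\ge 1$ and $\alpha\ge 1$ be integers and $G$ a finite graph. Then $K_{2+\alpha}\star G$ is $(d+\alpha)$-ball packable if and only if $G$ is isomorphic to the minimal-distance graph of some $(d,\tfrac{1}{\alpha+1})$-spherical code.
   Context: For $\theta\in(0,\pi)$, a $(d,\cos\theta)$-spherical code is a finite set of points on the unit sphere $\mathbb S^{d-1}\subset\mathbb R^d$ such that the spherical (angular) distance between any two of its points is at least $\theta$; its minimal-distance graph has the points as vertices, two points adjacent iff their spherical distance equals $\theta$. $K_n$ is the complete graph, $\star$ the graph join. A $D$-ball in $\hat{\mathbb R}^D$ is a closed ball, closed exterior of an open ball with $\infty$, or a closed half-space with $\infty$; a $D$-ball packing is a collection of $D$-balls with disjoint interiors; its tangency graph joins balls meeting in exactly one point; a graph is $D$-ball packable if isomorphic to the tangency graph of some $D$-ball packing. *)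

theory Defs
  imports Complex_Main
begin

type_synonym 'a graph = "'a set \<times> ('a \<Rightarrow> 'a \<Rightarrow> bool)"

definition finite_graph :: "'a graph \<Rightarrow> bool" where
  "finite_graph G \<longleftrightarrow> finite (fst G)
     \<and> (\<forall>u v. snd G u v \<longrightarrow> u \<in> fst G \<and> v \<in> fst G)
     \<and> (\<forall>u v. snd G u v \<longrightarrow> snd G v u)
     \<and> (\<forall>u. \<not> snd G u u)"

definition graph_iso :: "'a graph \<Rightarrow> 'b graph \<Rightarrow> bool" where
  "graph_iso G H \<longleftrightarrow> (\<exists>f. bij_betw f (fst G) (fst H)
     \<and> (\<forall>u\<in>fst G. \<forall>v\<in>fst G. snd G u v \<longleftrightarrow> snd H (f u) (f v)))"

definition complete_graph :: "nat \<Rightarrow> nat graph" where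
  "complete_graph n = ({..<n}, \<lambda>u v. u < n \<and> v < n \<and> u \<noteq> v)"

definition graph_join :: "'a graph \<Rightarrow> 'b graph \<Rightarrow> ('a + 'b) graph" where
  "graph_join G H = (Inl ` fst G \<union> Inr ` fst H,
     \<lambda>x y. (case (x, y) of
        (Inl u, Inl v) \<Rightarrow> snd G u v
      | (Inr u, Inr v) \<Rightarrow> snd H u v
      | (Inl u, Inr v) \<Rightarrow> u \<in> fst G \<and> v \<in> fst H
      | (Inr u, Inl v) \<Rightarrow> u \<in> fst H \<and> v \<in> fst G))"

definition euc :: "nat \<Rightarrow> (nat \<Rightarrow> real) set" where
  "euc n = {x. \<forall>i\<ge>n. x i = 0}"

definition ip :: "nat \<Rightarrow> (nat \<Rightarrow> real) \<Rightarrow> (nat \<Rightarrow> real) \<Rightarrow> real" where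
  "ip n x y = (\<Sum>i<n. x i * y i)"

definition enorm :: "nat \<Rightarrow> (nat \<Rightarrow> real) \<Rightarrow> real" where
  "enorm n x = sqrt (ip n x x)"

definition edist :: "nat \<Rightarrow> (nat \<Rightarrow> real) \<Rightarrow> (nat \<Rightarrow> real) \<Rightarrow> real" where
  "edist n x y = enorm n (\<lambda>i. x i - y i)"

definition unit_sphere :: "nat \<Rightarrow> (nat \<Rightarrow> real) set" where
  "unit_sphere d = {x \<in> euc d. enorm d x = 1}"

definition sph_dist :: "nat \<Rightarrow> (nat \<Rightarrow> real) \<Rightarrow> (nat \<Rightarrow> real) \<Rightarrow> real" where
  "sph_dist d x y = arccos (ip d x y)"

text \<open>A (d, cos theta)-spherical code, 0 < theta < pi.\<close>
definition spherical_code :: "nat \<Rightarrow> real \<Rightarrow> (nat \<Rightarrow> real) set \<Rightarrow> bool" where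
  "spherical_code d \<theta> X \<longleftrightarrow> 0 < \<theta> \<and> \<theta> < pi \<and> finite X \<and> X \<subseteq> unit_sphere d
     \<and> (\<forall>x\<in>X. \<forall>y\<in>X. x \<noteq> y \<longrightarrow> sph_dist d x y \<ge> \<theta>)"

definition min_dist_graph :: "nat \<Rightarrow> real \<Rightarrow> (nat \<Rightarrow> real) set \<Rightarrow> (nat \<Rightarrow> real) graph" where
  "min_dist_graph d \<theta> X = (X, \<lambda>x y. x \<in> X \<and> y \<in> X \<and> x \<noteq> y \<and> sph_dist d x y = \<theta>)"

text \<open>Points of the extended space: Some x for x in R^D, None for the point at infinity.\<close>
type_synonym ext_point = "(nat \<Rightarrow> real) option"

definition ext_space :: "nat \<Rightarrow> ext_point set" where
  "ext_space D = insert None (Some ` euc D)"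

definition is_ball :: "nat \<Rightarrow> ext_point set \<Rightarrow> bool" where
  "is_ball D B \<longleftrightarrow>
     (\<exists>c\<in>euc D. \<exists>r>0. B = Some ` {x \<in> euc D. edist D x c \<le> r})
   \<or> (\<exists>c\<in>euc D. \<exists>r>0. B = insert None (Some ` {x \<in> euc D. edist D x c \<ge> r}))
   \<or> (\<exists>u\<in>euc D. \<exists>t. u \<noteq> (\<lambda>_. 0) \<and> B = insert None (Some ` {x \<in> euc D. ip D u x \<le> t}))"

definition ext_interior :: "nat \<Rightarrow> ext_point set \<Rightarrow> ext_point set" where
  "ext_interior D S =
     Some ` {x \<in> euc D. \<exists>e>0. \<forall>y\<in>euc D. edist D y x < e \<longrightarrow> Some y \<in> S}
   \<union> {p. p = None \<and> None \<in> S \<and> (\<exists>M. \<forall>y\<in>euc D. enorm D y > M \<longrightarrow> Some y \<in> S)}"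

definition ball_packing :: "nat \<Rightarrow> ext_point set set \<Rightarrow> bool" where
  "ball_packing D P \<longleftrightarrow> (\<forall>B\<in>P. is_ball D B)
     \<and> (\<forall>B\<in>P. \<forall>B'\<in>P. B \<noteq> B' \<longrightarrow> ext_interior D B \<inter> ext_interior D B' = {})"

definition tangency_graph :: "ext_point set set \<Rightarrow> ext_point set graph" where
  "tangency_graph P = (P, \<lambda>B B'. B \<in> P \<and> B' \<in> P \<and> B \<noteq> B' \<and> (\<exists>!p. p \<in> B \<inter> B'))"

definition ball_packable :: "nat \<Rightarrow> 'a graph \<Rightarrow> bool" where
  "ball_packable D G \<longleftrightarrow> (\<exists>P. ball_packing D P \<and> graph_iso G (tangency_graph P))"

end

theory Submission
  imports Defs
begin

lemma ip_sym: "ip n x y = ip n y x"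
  by (simp add: ip_def mult.commute)

lemma ip_add_left: "ip n (\<lambda>i. x i + y i) z = ip n x z + ip n y z"
  by (simp add: ip_def sum.distrib algebra_simps)
lemma ip_add_right: "ip n z (\<lambda>i. x i + y i) = ip n z x + ip n z y"
  by (simp add: ip_def sum.distrib algebra_simps)
lemma ip_diff_left: "ip n (\<lambda>i. x i - y i) z = ip n x z - ip n y z"
  by (simp add: ip_def sum_subtractf algebra_simps)
lemma ip_diff_right: "ip n z (\<lambda>i. x i - y i) = ip n z x - ip n z y"
  by (simp add: ip_def sum_subtractf algebra_simps)
lemma ip_scale_left: "ip n (\<lambda>i. c * x i) z = c * ip n x z"
  by (simp add: ip_def sum_distrib_left algebra_simps)
lemma ip_scale_right: "ip n z (\<lambda>i. c * x i) = c * ip n z x"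
  by (simp add: ip_def sum_distrib_left algebra_simps)
lemma ip_div_left: "ip n (\<lambda>i. x i / c) z = ip n x z / c"
  by (simp add: ip_def sum_divide_distrib)
lemma ip_div_right: "ip n z (\<lambda>i. x i / c) = ip n z x / c"
  by (simp add: ip_def sum_divide_distrib)
lemma ip_neg_left: "ip n (\<lambda>i. - x i) z = - ip n x z"
  by (simp add: ip_def sum_negf)
lemma ip_neg_right: "ip n z (\<lambda>i. - x i) = - ip n z x"
  by (simp add: ip_def sum_negf)
lemma ip_zero_left[simp]: "ip n (\<lambda>i. 0) z = 0"
  by (simp add: ip_def)
lemma ip_zero_right[simp]: "ip n z (\<lambda>i. 0) = 0"
  by (simp add: ip_def)

lemmas ip_lin = ip_add_left ip_add_right ip_diff_left ip_diff_right ip_scale_left ip_scale_right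
  ip_neg_left ip_neg_right ip_div_left ip_div_right

lemma ip_self_nonneg: "0 \<le> ip n x x"
  by (simp add: ip_def sum_nonneg)

lemma ip_self_eq0: "x \<in> euc n \<Longrightarrow> ip n x x = 0 \<longleftrightarrow> x = (\<lambda>i. 0)"
proof
  assume x: "x \<in> euc n" and h: "ip n x x = 0"
  have "\<forall>i\<in>{..<n}. x i * x i = 0"
    using h by (subst sum_nonneg_eq_0_iff[symmetric]) (auto simp: ip_def)
  then have "\<forall>i<n. x i = 0" by auto
  moreover have "\<forall>i\<ge>n. x i = 0" using x by (auto simp: euc_def)
  ultimately show "x = (\<lambda>i. 0)" by (metis linorder_not_le)
qed (simp)

lemma euc_ip_ext: assumes "x \<in> euc k" "k \<le> n" shows "ip n x y = ip k x y"
proof -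
  have "ip n x y = (\<Sum>i\<in>{..<k} \<union> {k..<n}. x i * y i)"
    unfolding ip_def using assms(2) by (intro sum.cong) auto
  also have "\<dots> = ip k x y + (\<Sum>i\<in>{k..<n}. x i * y i)"
    by (subst sum.union_disjoint) (auto simp: ip_def)
  also have "(\<Sum>i\<in>{k..<n}. x i * y i) = 0" using assms(1) by (auto simp: euc_def)
  finally show ?thesis by simp
qed

lemma euc_ip_ext2: assumes "y \<in> euc k" "k \<le> n" shows "ip n x y = ip k x y"
  using euc_ip_ext[OF assms, of x] by (simp add: ip_sym)

lemma ip_Suc: "ip (Suc n) x y = ip n x y + x n * y n"
  by (simp add: ip_def)

lemma euc_add: "x \<in> euc n \<Longrightarrow> y \<in> euc n \<Longrightarrow> (\<lambda>i. x i + y i) \<in> euc n"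
  and euc_diff: "x \<in> euc n \<Longrightarrow> y \<in> euc n \<Longrightarrow> (\<lambda>i. x i - y i) \<in> euc n"
  and euc_scale: "x \<in> euc n \<Longrightarrow> (\<lambda>i. c * x i) \<in> euc n"
  and euc_neg: "x \<in> euc n \<Longrightarrow> (\<lambda>i. - x i) \<in> euc n"
  and euc_zero: "(\<lambda>i. 0) \<in> euc n"
  by (auto simp: euc_def)

lemma euc_mono: "x \<in> euc k \<Longrightarrow> k \<le> n \<Longrightarrow> x \<in> euc n"
  by (auto simp: euc_def)

lemma cs_sq: "(ip n x y)^2 \<le> ip n x x * ip n y y"
proof -
  define a where "a = ip n x x"
  define b where "b = ip n y y"
  define c where "c = ip n x y"
  have a0: "a \<ge> 0" "b \<ge> 0" using ip_self_nonneg a_def b_def by auto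
  have key: "\<And>t. 0 \<le> a * t^2 - 2 * c * t + b"
  proof -
    fix t
    have "0 \<le> ip n (\<lambda>i. t * x i - y i) (\<lambda>i. t * x i - y i)" by (rule ip_self_nonneg)
    also have "\<dots> = a * t^2 - 2 * c * t + b"
      by (simp add: ip_lin a_def b_def c_def ip_sym[of n y x] power2_eq_square algebra_simps)
    finally show "0 \<le> a * t^2 - 2 * c * t + b" .
  qed
  show ?thesis
  proof (cases "a = 0")
    case True
    have "c = 0"
    proof (rule ccontr)
      assume "c \<noteq> 0"
      have "0 \<le> - 2 * c * ((b + 1) / (2 * c)) + b" using key[of "(b+1)/(2*c)"] True by simp
      also have "\<dots> = -1" using \<open>c \<noteq> 0\<close> by (simp add: field_simps)
      finally show False by simp
    qed
    then show ?thesis using True by (simp add: a_def b_def c_def)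
  next
    case False
    then have "a > 0" using a0 by simp
    have "0 \<le> a * (c/a)^2 - 2 * c * (c/a) + b" by (rule key)
    also have "\<dots> = (a*b - c^2)/a" using \<open>a>0\<close> by (simp add: field_simps power2_eq_square)
    finally have "0 \<le> a*b - c^2" using \<open>a>0\<close> by (simp add: zero_le_divide_iff)
    then show ?thesis by (simp add: a_def b_def c_def)
  qed
qed

lemma cs: "ip n x y \<le> sqrt (ip n x x) * sqrt (ip n y y)"
proof -
  have "\<bar>ip n x y\<bar> \<le> sqrt (ip n x x * ip n y y)"
    using cs_sq[of n x y] by (simp add: real_le_rsqrt)
  then show ?thesis by (simp add: real_sqrt_mult)
qed

lemma cs_abs: "\<bar>ip n x y\<bar> \<le> sqrt (ip n x x) * sqrt (ip n y y)"
  using cs_sq[of n x y] by (simp add: real_le_rsqrt real_sqrt_mult[symmetric])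

definition ev :: "nat \<Rightarrow> nat \<Rightarrow> real" where "ev m = (\<lambda>i. if i = m then 1 else 0)"

lemma ip_ev_right: "ip n x (ev m) = (if m < n then x m else 0)"
  by (simp add: ip_def ev_def if_distrib[of "\<lambda>t. x _ * t"] sum.delta cong: if_cong)
lemma ip_ev_left: "ip n (ev m) x = (if m < n then x m else 0)"
  by (simp add: ip_sym ip_ev_right)

lemma ip_restrict: "(\<And>i. i < n \<Longrightarrow> x i = x' i) \<Longrightarrow> (\<And>i. i < n \<Longrightarrow> y i = y' i) \<Longrightarrow> ip n x y = ip n x' y'"
  by (simp add: ip_def)

lemma reduce_step:
  assumes p: "p \<in> euc k" and pp: "ip k p p > 0"
  shows "\<exists>g. (\<forall>x\<in>euc k. g x \<in> euc (k-1)) \<and>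
     (\<forall>x\<in>euc k. \<forall>z\<in>euc k. ip (k-1) (g x) (g z) = ip k x z - ip k x p * ip k z p / ip k p p)"
proof -
  obtain m where km: "k = Suc m" using pp by (cases k) (auto simp: ip_def)
  define L where "L = sqrt (ip k p p)"
  have L0: "L > 0" using pp by (simp add: L_def)
  have LL: "L * L = ip k p p" using pp by (simp add: L_def)
  define q where "q = (\<lambda>i. (1/L) * p i)"
  have qq: "ip k q q = 1" using L0 LL pp by (simp add: q_def ip_lin)
  have xq: "\<And>x. ip k x q = ip k x p / L" by (simp add: q_def ip_lin)
  define \<sigma> :: real where "\<sigma> = (if q m > 0 then -1 else 1)"
  have s2: "\<sigma> * \<sigma> = 1" by (simp add: \<sigma>_def)
  have s3: "\<And>y. \<sigma> * (\<sigma> * y) = y" by (simp add: \<sigma>_def)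
  have sq: "\<sigma> * q m \<le> 0" by (simp add: \<sigma>_def)
  define w where "w = (\<lambda>i. q i - \<sigma> * ev m i)"
  have e1: "ip k (ev m) (ev m) = 1" "ip k q (ev m) = q m" "ip k (ev m) q = q m"
    using km by (simp_all add: ip_ev_left ip_ev_right) (simp add: ev_def)
  have ww: "ip k w w = 2 - 2 * \<sigma> * q m"
    using s2 qq unfolding w_def by (simp add: ip_lin e1 algebra_simps)
  have ww0: "ip k w w > 0" using ww sq by simp
  have wx: "\<And>x. ip k w x = ip k q x - \<sigma> * x m"
    using km by (simp add: w_def ip_lin ip_ev_left)
  define H where "H = (\<lambda>x i. x i - (2 * ip k w x / ip k w w) * w i)"
  have HH: "\<And>x z. ip k (H x) (H z) = ip k x z"
  proof -
    fix x z
    define a where "a = 2 * ip k w x / ip k w w"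
    define b where "b = 2 * ip k w z / ip k w w"
    have "ip k (H x) (H z) = ip k (\<lambda>i. x i - a * w i) (\<lambda>i. z i - b * w i)"
      by (simp add: H_def a_def b_def)
    also have "\<dots> = ip k x z - b * ip k x w - a * ip k w z + a * b * ip k w w"
      by (simp add: ip_lin algebra_simps)
    also have "\<dots> = ip k x z" using ww0 unfolding a_def b_def
      by (simp add: field_simps ip_sym[of k x w])
    finally show "ip k (H x) (H z) = ip k x z" .
  qed
  have Hm: "\<And>x. H x m = \<sigma> * ip k x q"
  proof -
    fix x
    have wm: "w m = q m - \<sigma>" by (simp add: w_def ev_def)
    have "H x m = x m - (2 * (ip k q x - \<sigma> * x m) / (2 - 2 * \<sigma> * q m)) * (q m - \<sigma>)"
      unfolding H_def ww by (simp add: wx wm)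
    also have "\<dots> = \<sigma> * ip k q x"
    proof -
      have d: "2 - 2 * \<sigma> * q m \<noteq> 0" using sq by simp
      have "q m - \<sigma> = - \<sigma> * (1 - \<sigma> * q m)" using s2 by (simp add: algebra_simps)
      then have "(2 * (ip k q x - \<sigma> * x m) / (2 - 2 * \<sigma> * q m)) * (q m - \<sigma>)
          = - \<sigma> * (ip k q x - \<sigma> * x m)" using d by (simp add: field_simps s3)
      then show ?thesis using s2 by (simp add: algebra_simps)
    qed
    finally show "H x m = \<sigma> * ip k x q" by (simp add: ip_sym)
  qed
  define g where "g = (\<lambda>x i. if i = m then 0 else H x i)"
  have qe: "q \<in> euc k" using p by (simp add: q_def euc_def)
  have we: "w \<in> euc k" using qe km by (auto simp: w_def euc_def ev_def)
  have "\<forall>x\<in>euc k. g x \<in> euc (k-1)"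
    using we km by (auto simp: g_def H_def euc_def)
  moreover have "\<forall>x\<in>euc k. \<forall>z\<in>euc k. ip (k-1) (g x) (g z) = ip k x z - ip k x p * ip k z p / ip k p p"
  proof (intro ballI)
    fix x z assume "x \<in> euc k" "z \<in> euc k"
    have "ip (k-1) (g x) (g z) = ip m (H x) (H z)"
      using km by (simp add: ip_def g_def)
    also have "\<dots> = ip k (H x) (H z) - H x m * H z m" using km by (simp add: ip_Suc)
    also have "\<dots> = ip k x z - ip k x q * ip k z q" using s2 by (simp add: HH Hm algebra_simps)
    also have "\<dots> = ip k x z - ip k x p * ip k z p / ip k p p"
      using LL L0 by (simp add: xq field_simps)
    finally show "ip (k-1) (g x) (g z) = ip k x z - ip k x p * ip k z p / ip k p p" .
  qed
  ultimately show ?thesis by blast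
qed

lemma shift_alg:
  fixes \<beta> h :: real and m :: nat
  assumes "\<beta> > 0" "h > 0"
  shows "\<beta> * \<beta> / (\<beta> + h) + real m * (\<beta> * h / (\<beta> + h))^2 / (h + real m * (\<beta> * h / (\<beta> + h)))
       = real (Suc m) * \<beta>^2 / (h + real (Suc m) * \<beta>)"
proof -
  have p1: "\<beta> + h > 0" using assms by simp
  have p2: "h + real m * \<beta> + \<beta> > 0" using assms by (simp add: add_pos_nonneg)
  define D1 where "D1 = \<beta> + h"
  define D2 where "D2 = h + real (Suc m) * \<beta>"
  have D1: "D1 > 0" using p1 by (simp add: D1_def)
  have D2: "D2 > 0" using p2 by (simp add: D2_def algebra_simps)
  have e: "h + real m * (\<beta> * h / (\<beta> + h)) = h * D2 / D1"
    using D1 unfolding D1_def D2_def by (simp add: field_simps)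
  have e2: "(\<beta> * h / (\<beta> + h))^2 = \<beta>^2 * h^2 / D1^2" by (simp add: D1_def power_divide power_mult_distrib)
  have e3: "real m * (\<beta>^2 * h^2 / D1^2) / (h * D2 / D1) = real m * \<beta>^2 * h / (D1 * D2)"
    using D1 D2 assms by (simp add: field_simps power2_eq_square)
  have e4: "D2 + real m * h = real (Suc m) * D1" by (simp add: D1_def D2_def algebra_simps)
  have "\<beta> * \<beta> / D1 + real m * \<beta>^2 * h / (D1 * D2) = \<beta>^2 * (D2 + real m * h) / (D1 * D2)"
    using D1 D2 by (simp add: field_simps power2_eq_square)
  also have "\<dots> = real (Suc m) * \<beta>^2 / D2" unfolding e4 using D1 D2 by (simp add: field_simps)
  finally show ?thesis unfolding e e2 e3 by (simp add: D1_def D2_def)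
qed

lemma simplex_reduce:
  "\<lbrakk>\<forall>c\<in>set C. c \<in> euc k;
    \<forall>i<length C. \<forall>j<length C. ip k (C!i) (C!j) = (if i = j then \<beta> + h else \<beta>);
    Y \<subseteq> euc k; \<forall>y\<in>Y. \<forall>c\<in>set C. ip k y c = \<beta>; \<beta> > 0; h > 0\<rbrakk> \<Longrightarrow>
   \<exists>f. (\<forall>y\<in>Y. f y \<in> euc (k - length C)) \<and>
      (\<forall>y\<in>Y. \<forall>z\<in>Y. ip (k - length C) (f y) (f z)
           = ip k y z - real (length C) * \<beta>^2 / (h + real (length C) * \<beta>))"
proof (induction "length C" arbitrary: C k Y \<beta>)
  case 0
  then show ?case by (rule_tac x="\<lambda>y. y" in exI) auto
next
  case (Suc n C k Y \<beta>)
  then obtain c C0 where Ceq: "C = c # C0" by (cases C) auto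
  have nC: "n = length (map g C0)" for g using Suc.hyps(2) Ceq by simp
  note P = Suc.prems[unfolded Ceq]
  have "?case"
  proof -
  have ce: "c \<in> euc k" using P by simp
  have cc: "ip k c c = \<beta> + h" using P(2)[rule_format, of 0 0] by simp
  have cc0: "ip k c c > 0" using cc P by simp
  obtain g where g1: "\<forall>x\<in>euc k. g x \<in> euc (k-1)"
    and g2: "\<forall>x\<in>euc k. \<forall>z\<in>euc k. ip (k-1) (g x) (g z) = ip k x z - ip k x c * ip k z c / ip k c c"
    using reduce_step[OF ce cc0] by blast
  define \<beta>' where "\<beta>' = \<beta> * h / (\<beta> + h)"
  have b'0: "\<beta>' > 0" using P by (simp add: \<beta>'_def)
  have Ce: "\<forall>x\<in>set C0. x \<in> euc k" using P by simp
  have Cc: "\<forall>i<length C0. ip k (C0!i) c = \<beta>"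
  proof (intro allI impI)
    fix i assume "i < length C0"
    then show "ip k (C0!i) c = \<beta>" using P(2)[rule_format, of "Suc i" 0] by simp
  qed
  have CC: "\<forall>i<length C0. \<forall>j<length C0. ip k (C0!i) (C0!j) = (if i = j then \<beta> + h else \<beta>)"
  proof (intro allI impI)
    fix i j assume "i < length C0" "j < length C0"
    then show "ip k (C0!i) (C0!j) = (if i = j then \<beta> + h else \<beta>)"
      using P(2)[rule_format, of "Suc i" "Suc j"] by simp
  qed
  have IH: "\<exists>f. (\<forall>y\<in>g ` Y. f y \<in> euc (k - 1 - length (map g C0))) \<and>
      (\<forall>y\<in>g ` Y. \<forall>z\<in>g ` Y. ip (k - 1 - length (map g C0)) (f y) (f z)
           = ip (k-1) y z - real (length (map g C0)) * \<beta>'^2 / (h + real (length (map g C0)) * \<beta>'))"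
  proof (rule Suc.hyps(1))
    show "\<forall>x\<in>set (map g C0). x \<in> euc (k - 1)" using Ce g1 by auto
    show "\<forall>i<length (map g C0). \<forall>j<length (map g C0).
        ip (k - 1) (map g C0 ! i) (map g C0 ! j) = (if i = j then \<beta>' + h else \<beta>')"
    proof (intro allI impI)
      fix i j assume ij: "i < length (map g C0)" "j < length (map g C0)"
      then have ie: "C0!i \<in> euc k" "C0!j \<in> euc k" using Ce by auto
      have "ip (k - 1) (map g C0 ! i) (map g C0 ! j) = ip k (C0!i) (C0!j) - \<beta> * \<beta> / (\<beta> + h)"
        using ij g2 ie Cc cc by simp
      then show "ip (k - 1) (map g C0 ! i) (map g C0 ! j) = (if i = j then \<beta>' + h else \<beta>')"
        using CC ij P(5,6) unfolding \<beta>'_def by (cases "i = j") (simp_all add: field_simps)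
    qed
    show "g ` Y \<subseteq> euc (k - 1)" using P(3) g1 by auto
    show "\<forall>y\<in>g ` Y. \<forall>x\<in>set (map g C0). ip (k - 1) y x = \<beta>'"
    proof (intro ballI)
      fix y x assume "y \<in> g ` Y" "x \<in> set (map g C0)"
      then obtain y0 x0 where "y0 \<in> Y" "x0 \<in> set C0" "y = g y0" "x = g x0" by auto
      moreover have "ip k y0 x0 = \<beta>" "ip k y0 c = \<beta>" "ip k x0 c = \<beta>"
        using P(4) calculation Cc by (auto simp: in_set_conv_nth)
      moreover have "y0 \<in> euc k" "x0 \<in> euc k" using calculation P(3) Ce by auto
      ultimately have "ip (k - 1) y x = \<beta> - \<beta> * \<beta> / (\<beta> + h)" using g2 cc by simp
      then show "ip (k - 1) y x = \<beta>'" using P(5,6) unfolding \<beta>'_def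
        by (simp add: field_simps)
    qed
  qed (use b'0 P nC in auto)
  then obtain f where f1: "\<forall>y\<in>g ` Y. f y \<in> euc (k - 1 - length C0)"
    and f2: "\<forall>y\<in>g ` Y. \<forall>z\<in>g ` Y. ip (k - 1 - length C0) (f y) (f z)
           = ip (k-1) y z - real (length C0) * \<beta>'^2 / (h + real (length C0) * \<beta>')" by auto
  have A1: "\<forall>y\<in>Y. f (g y) \<in> euc (k - length (c # C0))" using f1 by simp
  have A2: "\<forall>y\<in>Y. \<forall>z\<in>Y. ip (k - length (c # C0)) (f (g y)) (f (g z)) = ip k y z - real (length (c # C0)) * \<beta>^2 / (h + real (length (c # C0)) * \<beta>)"
  proof (intro ballI)
    fix y z assume yz: "y \<in> Y" "z \<in> Y"
    then have ye: "y \<in> euc k" "z \<in> euc k" using P(3) by auto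
    have yc: "ip k y c = \<beta>" "ip k z c = \<beta>" using P(4) yz by auto
    have "ip (k - length (c # C0)) (f (g y)) (f (g z)) = ip (k-1) (g y) (g z) - real (length C0) * \<beta>'^2 / (h + real (length C0) * \<beta>')"
      using f2 yz by simp
    also have "\<dots> = ip k y z - (\<beta> * \<beta> / (\<beta> + h) + real (length C0) * \<beta>'^2 / (h + real (length C0) * \<beta>'))"
      using g2 ye yc cc by simp
    also have "\<beta> * \<beta> / (\<beta> + h) + real (length C0) * \<beta>'^2 / (h + real (length C0) * \<beta>') = 
       real (length (c # C0)) * \<beta>^2 / (h + real (length (c # C0)) * \<beta>)"
      unfolding \<beta>'_def using shift_alg[OF P(5,6)] by simp
    finally show "ip (k - length (c # C0)) (f (g y)) (f (g z)) = ip k y z - real (length (c # C0)) * \<beta>^2 / (h + real (length (c # C0)) * \<beta>)" .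
  qed
  show ?thesis unfolding Ceq by (rule exI[of _ "\<lambda>y. f (g y)"]) (use A1 A2 in blast)
qed
  then show ?case .
qed

definition Fq :: "nat \<Rightarrow> real \<Rightarrow> (nat \<Rightarrow> real) \<Rightarrow> real \<Rightarrow> (nat \<Rightarrow> real) \<Rightarrow> real" where
  "Fq D a b c x = a * ip D x x - 2 * ip D b x + c"

definition Sset :: "nat \<Rightarrow> real \<Rightarrow> (nat \<Rightarrow> real) \<Rightarrow> real \<Rightarrow> ext_point set" where
  "Sset D a b c = Some ` {x \<in> euc D. Fq D a b c x \<le> 0} \<union> (if a \<le> 0 then {None} else {})"

definition Sint :: "nat \<Rightarrow> real \<Rightarrow> (nat \<Rightarrow> real) \<Rightarrow> real \<Rightarrow> ext_point set" where
  "Sint D a b c = Some ` {x \<in> euc D. Fq D a b c x < 0} \<union> (if a < 0 then {None} else {})"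

definition nondeg :: "nat \<Rightarrow> real \<Rightarrow> (nat \<Rightarrow> real) \<Rightarrow> real \<Rightarrow> bool" where
  "nondeg D a b c \<longleftrightarrow> b \<in> euc D \<and> ip D b b - a * c > 0"

lemma Some_in_Sset: "Some x \<in> Sset D a b c \<longleftrightarrow> x \<in> euc D \<and> Fq D a b c x \<le> 0"
  by (auto simp: Sset_def)
lemma None_in_Sset: "None \<in> Sset D a b c \<longleftrightarrow> a \<le> 0"
  by (auto simp: Sset_def)
lemma Some_in_Sint: "Some x \<in> Sint D a b c \<longleftrightarrow> x \<in> euc D \<and> Fq D a b c x < 0"
  by (auto simp: Sint_def)
lemma None_in_Sint: "None \<in> Sint D a b c \<longleftrightarrow> a < 0"
  by (auto simp: Sint_def)
lemma Sset_sub: "Sset D a b c \<subseteq> ext_space D"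
  by (auto simp: Sset_def ext_space_def)
lemma Sint_sub_Sset: "Sint D a b c \<subseteq> Sset D a b c"
  by (auto simp: Sset_def Sint_def)

lemma ip_diff_sq: "ip n (\<lambda>i. x i - y i) (\<lambda>i. x i - y i) = ip n x x - 2 * ip n x y + ip n y y"
  by (simp add: ip_lin ip_sym[of n y x])

lemma edist_le_iff: "r > 0 \<Longrightarrow> edist D x y \<le> r \<longleftrightarrow> ip D (\<lambda>i. x i - y i) (\<lambda>i. x i - y i) \<le> r^2"
proof -
  assume r: "r > 0"
  have "r = sqrt (r^2)" using r by simp
  then show ?thesis unfolding edist_def enorm_def by (metis real_sqrt_le_iff)
qed

lemma edist_ge_iff: "r > 0 \<Longrightarrow> edist D x y \<ge> r \<longleftrightarrow> ip D (\<lambda>i. x i - y i) (\<lambda>i. x i - y i) \<ge> r^2"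
proof -
  assume r: "r > 0"
  have "r = sqrt (r^2)" using r by simp
  then show ?thesis unfolding edist_def enorm_def by (metis real_sqrt_le_iff)
qed

lemma Fq_ball: "Fq D 1 cc (ip D cc cc - r^2) x = ip D (\<lambda>i. x i - cc i) (\<lambda>i. x i - cc i) - r^2"
  by (simp add: Fq_def ip_diff_sq ip_sym[of D cc x])

lemma Fq_ext: "Fq D (-1) (\<lambda>i. - cc i) (r^2 - ip D cc cc) x = r^2 - ip D (\<lambda>i. x i - cc i) (\<lambda>i. x i - cc i)"
  by (simp add: Fq_def ip_diff_sq ip_sym[of D cc x] ip_lin)

lemma Fq_half: "Fq D 0 (\<lambda>i. - u i / 2) (-t) x = ip D u x - t"
  by (simp add: Fq_def ip_lin)

lemma is_ball_params:
  assumes "is_ball D B" shows "\<exists>a b c. nondeg D a b c \<and> B = Sset D a b c"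
  using assms unfolding is_ball_def
proof (elim disjE)
  assume "\<exists>c\<in>euc D. \<exists>r>0. B = Some ` {x \<in> euc D. edist D x c \<le> r}"
  then obtain cc r where cc: "cc \<in> euc D" and r: "r > 0" and B: "B = Some ` {x \<in> euc D. edist D x cc \<le> r}"
    by blast
  have n1: "nondeg D 1 cc (ip D cc cc - r^2)" using cc r by (simp add: nondeg_def)
  have "{x \<in> euc D. edist D x cc \<le> r} = {x \<in> euc D. Fq D 1 cc (ip D cc cc - r^2) x \<le> 0}"
    using r by (simp add: Fq_ball edist_le_iff)
  then have "B = Sset D 1 cc (ip D cc cc - r^2)"
    unfolding B Sset_def by simp
  with n1 show ?thesis by (intro exI[of _ 1] exI[of _ cc] exI[of _ "ip D cc cc - r^2"] conjI)
next
  assume "\<exists>c\<in>euc D. \<exists>r>0. B = insert None (Some ` {x \<in> euc D. edist D x c \<ge> r})"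
  then obtain cc r where cc: "cc \<in> euc D" and r: "r > 0" and B: "B = insert None (Some ` {x \<in> euc D. edist D x cc \<ge> r})"
    by blast
  have n1: "nondeg D (-1) (\<lambda>i. - cc i) (r^2 - ip D cc cc)" using cc r by (simp add: nondeg_def ip_lin euc_neg)
  have "{x \<in> euc D. edist D x cc \<ge> r} = {x \<in> euc D. Fq D (-1) (\<lambda>i. - cc i) (r^2 - ip D cc cc) x \<le> 0}"
    using r by (simp add: Fq_ext edist_ge_iff)
  then have "B = Sset D (-1) (\<lambda>i. - cc i) (r^2 - ip D cc cc)"
    unfolding B Sset_def by simp
  with n1 show ?thesis by (intro exI[of _ "-1"] exI[of _ "\<lambda>i. - cc i"] exI[of _ "r^2 - ip D cc cc"] conjI)
next
  assume "\<exists>u\<in>euc D. \<exists>t. u \<noteq> (\<lambda>_. 0) \<and> B = insert None (Some ` {x \<in> euc D. ip D u x \<le> t})"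
  then obtain u t where u: "u \<in> euc D" "u \<noteq> (\<lambda>_. 0)" and B: "B = insert None (Some ` {x \<in> euc D. ip D u x \<le> t})"
    by blast
  have "ip D u u \<noteq> 0" using ip_self_eq0[OF u(1)] u(2) by simp
  then have "ip D u u > 0" using ip_self_nonneg[of D u] by simp
  then have n1: "nondeg D 0 (\<lambda>i. - u i / 2) (-t)" using u by (simp add: nondeg_def ip_lin euc_def)
  have "{x \<in> euc D. ip D u x \<le> t} = {x \<in> euc D. Fq D 0 (\<lambda>i. - u i / 2) (-t) x \<le> 0}"
    unfolding Fq_half by simp
  then have "B = Sset D 0 (\<lambda>i. - u i / 2) (-t)"
    unfolding B Sset_def by simp
  with n1 show ?thesis by (intro exI[of _ "0"] exI[of _ "\<lambda>i. - u i / 2"] exI[of _ "-t"] conjI)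
qed

lemma enorm_sq: "enorm D x ^ 2 = ip D x x"
  using ip_self_nonneg[of D x] by (simp add: enorm_def)
lemma enorm_nonneg: "enorm D x \<ge> 0"
  using ip_self_nonneg[of D x] by (simp add: enorm_def)

lemma Fq_shift: "Fq D a b c (\<lambda>i. x i + h i) = Fq D a b c x + 2 * ip D (\<lambda>i. a * x i - b i) h + a * ip D h h"
  by (simp add: Fq_def ip_lin ip_sym[of D h x] algebra_simps)

lemma cs_enorm: "ip D x y \<le> enorm D x * enorm D y"
  unfolding enorm_def by (rule cs)
lemma cs_enorm_abs: "\<bar>ip D x y\<bar> \<le> enorm D x * enorm D y"
  unfolding enorm_def by (rule cs_abs)

lemma enorm_scale: "enorm D (\<lambda>i. t * x i) = \<bar>t\<bar> * enorm D x"
proof -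
  have "ip D (\<lambda>i. t * x i) (\<lambda>i. t * x i) = t^2 * ip D x x" by (simp add: ip_lin power2_eq_square)
  then show ?thesis unfolding enorm_def by (simp add: real_sqrt_mult)
qed

lemma interior_some:
  assumes nd: "nondeg D a b c" and x: "x \<in> euc D"
  shows "(\<exists>e>0. \<forall>y\<in>euc D. edist D y x < e \<longrightarrow> Some y \<in> Sset D a b c) \<longleftrightarrow> Fq D a b c x < 0"
proof
  assume "Fq D a b c x < 0"
  define w where "w = (\<lambda>i. a * x i - b i)"
  define W where "W = enorm D w"
  have W0: "W \<ge> 0" by (simp add: W_def enorm_nonneg)
  define K where "K = 2 * W + \<bar>a\<bar> + 1"
  have K0: "K > 0" using W0 by (simp add: K_def add_nonneg_pos)
  define e where "e = min 1 (- Fq D a b c x / K)"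
  have e0: "e > 0" using \<open>Fq D a b c x < 0\<close> K0 by (simp add: e_def divide_neg_pos)
  have "\<forall>y\<in>euc D. edist D y x < e \<longrightarrow> Some y \<in> Sset D a b c"
  proof (intro ballI impI)
    fix y assume y: "y \<in> euc D" and dy: "edist D y x < e"
    define h where "h = (\<lambda>i. y i - x i)"
    define H where "H = enorm D h"
    have H: "H < e" "H \<ge> 0" using dy by (simp_all add: H_def h_def edist_def enorm_nonneg)
    have Hle1: "H * H \<le> H" using H unfolding e_def by (simp add: mult_le_one mult_left_le)
    have yy: "y = (\<lambda>i. x i + h i)" by (simp add: h_def)
    have "Fq D a b c y = Fq D a b c x + 2 * ip D w h + a * ip D h h"
      unfolding yy Fq_shift w_def ..
    also have "\<dots> \<le> Fq D a b c x + 2 * (W * H) + \<bar>a\<bar> * (H * H)"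
    proof -
      have "ip D w h \<le> W * H" unfolding W_def H_def by (rule cs_enorm)
      moreover have "a * ip D h h \<le> \<bar>a\<bar> * (H * H)"
      proof -
        have "H * H = ip D h h" using enorm_sq[of D h] unfolding H_def by (simp add: power2_eq_square)
        moreover have "a * ip D h h \<le> \<bar>a\<bar> * ip D h h"
          by (rule mult_right_mono[OF abs_ge_self ip_self_nonneg])
        ultimately show ?thesis by simp
      qed
      ultimately show ?thesis by simp
    qed
    also have "\<dots> \<le> Fq D a b c x + K * H"
    proof -
      have "\<bar>a\<bar> * (H * H) \<le> \<bar>a\<bar> * H" using Hle1 by (simp add: mult_left_mono)
      then show ?thesis unfolding K_def using H by (simp add: algebra_simps)
    qed
    also have "\<dots> \<le> Fq D a b c x + K * e" using H K0 by simp
    also have "\<dots> \<le> 0"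
    proof -
      have "K * e \<le> K * (- Fq D a b c x / K)" using K0 by (intro mult_left_mono) (auto simp: e_def)
      then show ?thesis using K0 by simp
    qed
    finally show "Some y \<in> Sset D a b c" using y by (simp add: Some_in_Sset)
  qed
  then show "\<exists>e>0. \<forall>y\<in>euc D. edist D y x < e \<longrightarrow> Some y \<in> Sset D a b c" using e0 by blast
next
  assume "\<exists>e>0. \<forall>y\<in>euc D. edist D y x < e \<longrightarrow> Some y \<in> Sset D a b c"
  then obtain e where e0: "e > 0" and e: "\<And>y. y \<in> euc D \<Longrightarrow> edist D y x < e \<Longrightarrow> Fq D a b c y \<le> 0"
    by (auto simp: Some_in_Sset)
  have "edist D x x = 0" by (simp add: edist_def enorm_def)
  then have Fx: "Fq D a b c x \<le> 0" using e[OF x] e0 by simp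
  show "Fq D a b c x < 0"
  proof (rule ccontr)
    assume "\<not> Fq D a b c x < 0"
    then have F0: "Fq D a b c x = 0" using Fx by simp
    define w where "w = (\<lambda>i. a * x i - b i)"
    have we: "w \<in> euc D" using x nd by (auto simp: w_def euc_def nondeg_def)
    show False
    proof (cases "ip D w w = 0")
      case True
      then have w0: "w = (\<lambda>i. 0)" using ip_self_eq0[OF we] by simp
      then have bb: "b = (\<lambda>i. a * x i)" unfolding w_def by (simp add: fun_eq_iff)
      have "ip D b b - a * c = - a * Fq D a b c x"
        unfolding bb Fq_def by (simp add: ip_lin algebra_simps)
      then show False using F0 nd by (simp add: nondeg_def)
    next
      case False
      then have ww: "ip D w w > 0" using ip_self_nonneg[of D w] by simp
      define W where "W = enorm D w"
      have W0: "W > 0" using ww by (simp add: W_def enorm_def)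
      define t where "t = min (e / (2 * W)) (1 / (\<bar>a\<bar> + 1))"
      have t0: "t > 0" using e0 W0 by (simp add: t_def)
      have t1: "\<bar>a\<bar> * t < 1"
      proof -
        have "t \<le> 1 / (\<bar>a\<bar> + 1)" by (simp add: t_def)
        then have "\<bar>a\<bar> * t \<le> \<bar>a\<bar> / (\<bar>a\<bar> + 1)" by (simp add: mult_left_mono divide_inverse)
        also have "\<dots> < 1" by simp
        finally show ?thesis .
      qed
      have t2: "t * W < e"
      proof -
        have "t \<le> e / (2 * W)" by (simp add: t_def)
        then have "t * W \<le> e / 2" using W0 by (simp add: field_simps)
        then show ?thesis using e0 by simp
      qed
      define y where "y = (\<lambda>i. x i + t * w i)"
      have ye: "y \<in> euc D" using x we by (auto simp: y_def euc_def)
      have "edist D y x = t * W"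
      proof -
        have "(\<lambda>i. y i - x i) = (\<lambda>i. t * w i)" by (simp add: y_def)
        then show ?thesis using t0 by (simp add: edist_def enorm_scale W_def)
      qed
      then have "Fq D a b c y \<le> 0" using e[OF ye] t2 by simp
      moreover have "Fq D a b c y = t * ip D w w * (2 + a * t)"
        unfolding y_def Fq_shift F0 by (simp add: ip_lin w_def[symmetric] algebra_simps)
      moreover have "2 + a * t > 0"
      proof -
        have "- (\<bar>a\<bar> * t) \<le> a * t" 
        proof -
          have "\<bar>a\<bar> * t = \<bar>a * t\<bar>" using t0 by (simp add: abs_mult)
          then show ?thesis using abs_ge_minus_self[of "a * t"] by linarith
        qed
        then show ?thesis using t1 by linarith
      qed
      ultimately show False using t0 ww by (metis mult_pos_pos not_le)
    qed
  qed
qed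

lemma interior_none:
  assumes nd: "nondeg D a b c"
  shows "(None \<in> Sset D a b c \<and> (\<exists>M. \<forall>y\<in>euc D. enorm D y > M \<longrightarrow> Some y \<in> Sset D a b c)) \<longleftrightarrow> a < 0"
proof (cases "a < 0")
  case True
  define B where "B = enorm D b"
  have B0: "B \<ge> 0" by (simp add: B_def enorm_nonneg)
  define M where "M = (2 * B + \<bar>c\<bar> + 1) / (- a) + 1"
  have "\<forall>y\<in>euc D. enorm D y > M \<longrightarrow> Some y \<in> Sset D a b c"
  proof (intro ballI impI)
    fix y assume y: "y \<in> euc D" and R: "enorm D y > M"
    define R where "R = enorm D y"
    have RM: "R > M" using R by (simp add: R_def)
    have M1: "M \<ge> 1" using True B0 by (simp add: M_def divide_nonneg_neg)
    have R1: "R \<ge> 1" using RM M1 by simp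
    have "a * R < a * M" using True RM by simp
    also have "a * M = - (2 * B + \<bar>c\<bar> + 1) + a" using True by (simp add: M_def field_simps)
    finally have aR: "a * R + 2 * B + \<bar>c\<bar> < 0" using True by simp
    have "Fq D a b c y = a * R^2 - 2 * ip D b y + c"
      by (simp add: Fq_def R_def enorm_sq)
    also have "\<dots> \<le> a * R^2 + 2 * (B * R) + \<bar>c\<bar> * R"
    proof -
      have "- ip D b y \<le> B * R" using cs_enorm_abs[of D b y] by (simp add: B_def R_def)
      moreover have "c \<le> \<bar>c\<bar> * R"
      proof -
        have "\<bar>c\<bar> * 1 \<le> \<bar>c\<bar> * R" using R1 by (intro mult_left_mono) auto
        then show ?thesis by simp
      qed
      ultimately show ?thesis by simp
    qed
    also have "\<dots> = R * (a * R + 2 * B + \<bar>c\<bar>)" by (simp add: power2_eq_square algebra_simps)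
    also have "\<dots> \<le> 0" using aR R1 by (simp add: mult_nonneg_nonpos)
    finally show "Some y \<in> Sset D a b c" using y by (simp add: Some_in_Sset)
  qed
  then show ?thesis using True by (auto simp: None_in_Sset)
next
  case False
  show ?thesis
  proof (cases "a = 0")
    case a0: True
    have "\<not> (\<exists>M. \<forall>y\<in>euc D. enorm D y > M \<longrightarrow> Some y \<in> Sset D a b c)"
    proof
      assume "\<exists>M. \<forall>y\<in>euc D. enorm D y > M \<longrightarrow> Some y \<in> Sset D a b c"
      then obtain M where M: "\<And>y. y \<in> euc D \<Longrightarrow> enorm D y > M \<Longrightarrow> Fq D a b c y \<le> 0"
        by (auto simp: Some_in_Sset)
      have bb: "ip D b b > 0" using nd a0 by (simp add: nondeg_def)
      define B where "B = enorm D b"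
      have B0: "B > 0" using bb by (simp add: B_def enorm_def)
      have BB: "B * B = ip D b b" using enorm_sq[of D b] by (simp add: B_def power2_eq_square)
      define t where "t = (\<bar>c\<bar> + 1) / ip D b b + (\<bar>M\<bar> + 1) / B"
      have t0: "t > 0" using bb B0 by (simp add: t_def add_pos_pos)
      define y where "y = (\<lambda>i. - t * b i)"
      have ye: "y \<in> euc D" using nd by (auto simp: y_def euc_def nondeg_def)
      have "enorm D y = t * B" using t0 enorm_scale[of D "-t" b] by (simp add: y_def B_def)
      also have "t * B \<ge> \<bar>M\<bar> + 1"
      proof -
        have "t * B = (\<bar>c\<bar> + 1) / ip D b b * B + (\<bar>M\<bar> + 1)" using B0 by (simp add: t_def field_simps)
        moreover have "(\<bar>c\<bar> + 1) / ip D b b * B \<ge> 0" using bb B0 by simp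
        ultimately show ?thesis by simp
      qed
      finally have "enorm D y > M" by simp
      then have "Fq D a b c y \<le> 0" using M ye by simp
      moreover have "Fq D a b c y = 2 * t * ip D b b + c" using a0 by (simp add: Fq_def y_def ip_lin)
      moreover have "2 * t * ip D b b \<ge> 2 * (\<bar>c\<bar> + 1)"
      proof -
        have "t * ip D b b = \<bar>c\<bar> + 1 + (\<bar>M\<bar> + 1) / B * ip D b b" using bb by (simp add: t_def field_simps)
        moreover have "(\<bar>M\<bar> + 1) / B * ip D b b \<ge> 0" using bb B0 by simp
        ultimately show ?thesis by simp
      qed
      ultimately show False by simp
    qed
    then show ?thesis using a0 by simp
  next
    case a1: False
    then have "a > 0" using False by simp
    then show ?thesis by (simp add: None_in_Sset)
  qed
qed

lemma interior_Sset:
  assumes nd: "nondeg D a b c"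
  shows "ext_interior D (Sset D a b c) = Sint D a b c"
proof -
  have A: "{x \<in> euc D. \<exists>e>0. \<forall>y\<in>euc D. edist D y x < e \<longrightarrow> Some y \<in> Sset D a b c}
      = {x \<in> euc D. Fq D a b c x < 0}"
    using interior_some[OF nd] by blast
  have B: "{p. p = None \<and> None \<in> Sset D a b c \<and> (\<exists>M. \<forall>y\<in>euc D. enorm D y > M \<longrightarrow> Some y \<in> Sset D a b c)}
      = (if a < 0 then {None} else {})"
    using interior_none[OF nd] by auto
  show ?thesis unfolding ext_interior_def A B Sint_def ..
qed

lemma Fq_center:
  assumes "a \<noteq> 0"
  shows "Fq D a b c x = a * (ip D (\<lambda>i. x i - b i / a) (\<lambda>i. x i - b i / a) - (ip D b b - a * c) / a^2)"
  using assms by (simp add: Fq_def ip_diff_sq ip_lin ip_sym[of D x b] field_simps power2_eq_square)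

lemma params_is_ball:
  assumes nd: "nondeg D a b c" shows "is_ball D (Sset D a b c)"
proof -
  have be: "b \<in> euc D" and disc: "ip D b b - a * c > 0" using nd by (auto simp: nondeg_def)
  define cc where "cc = (\<lambda>i. b i / a)"
  have cce: "cc \<in> euc D" using be by (auto simp: cc_def euc_def)
  consider "a > 0" | "a < 0" | "a = 0" by linarith
  then show ?thesis
  proof cases
    case 1
    define r where "r = sqrt (ip D b b - a * c) / a"
    have r0: "r > 0" using 1 disc by (simp add: r_def)
    have r2: "r^2 = (ip D b b - a * c) / a^2" using disc by (simp add: r_def power_divide)
    have "{x \<in> euc D. Fq D a b c x \<le> 0} = {x \<in> euc D. edist D x cc \<le> r}"
      using 1 r0 by (simp add: Fq_center edist_le_iff r2 cc_def mult_le_0_iff)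
    then have "Sset D a b c = Some ` {x \<in> euc D. edist D x cc \<le> r}"
      unfolding Sset_def using 1 by simp
    then show ?thesis unfolding is_ball_def using cce r0 by blast
  next
    case 2
    define r where "r = sqrt (ip D b b - a * c) / (- a)"
    have r0: "r > 0" using 2 disc by (simp add: r_def divide_pos_neg)
    have r2: "r^2 = (ip D b b - a * c) / a^2" using disc by (simp add: r_def power_divide)
    have "{x \<in> euc D. Fq D a b c x \<le> 0} = {x \<in> euc D. edist D x cc \<ge> r}"
      using 2 r0 by (simp add: Fq_center edist_ge_iff r2 cc_def mult_le_0_iff)
    then have "Sset D a b c = insert None (Some ` {x \<in> euc D. edist D x cc \<ge> r})"
      unfolding Sset_def using 2 by auto
    then show ?thesis unfolding is_ball_def using cce r0 by blast
  next
    case 3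
    define u where "u = (\<lambda>i. -2 * b i)"
    have ue: "u \<in> euc D" using be by (auto simp: u_def euc_def)
    have un: "u \<noteq> (\<lambda>_. 0)"
    proof
      assume "u = (\<lambda>_. 0)"
      then have "b = (\<lambda>_. 0)" by (auto simp: u_def fun_eq_iff)
      then show False using disc 3 by simp
    qed
    have "{x \<in> euc D. Fq D a b c x \<le> 0} = {x \<in> euc D. ip D u x \<le> - c}"
      using 3 by (auto simp: Fq_def u_def ip_lin)
    then have "Sset D a b c = insert None (Some ` {x \<in> euc D. ip D u x \<le> - c})"
      unfolding Sset_def using 3 by auto
    then show ?thesis unfolding is_ball_def using ue un by blast
  qed
qed

lemma image_by_inverse:
  assumes "\<forall>w\<in>U. \<Psi> w \<in> U" "\<forall>w\<in>U. \<Psi>' w \<in> U" "\<forall>w\<in>U. \<Psi> (\<Psi>' w) = w"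
    "S \<subseteq> U" "S' \<subseteq> U" "\<forall>w\<in>U. \<Psi> w \<in> S' \<longleftrightarrow> w \<in> S"
  shows "S' = \<Psi> ` S"
proof
  show "\<Psi> ` S \<subseteq> S'" using assms by blast
  show "S' \<subseteq> \<Psi> ` S"
  proof
    fix z assume z: "z \<in> S'"
    then have "z \<in> U" using assms by blast
    then have "\<Psi>' z \<in> S" using assms z by metis
    moreover have "z = \<Psi> (\<Psi>' z)" using assms \<open>z \<in> U\<close> by metis
    ultimately show "z \<in> \<Psi> ` S" by blast
  qed
qed

definition tmap :: "(nat \<Rightarrow> real) \<Rightarrow> ext_point \<Rightarrow> ext_point" where
  "tmap q = map_option (\<lambda>x i. x i - q i)"

lemma Fq_trans: "Fq D a (\<lambda>i. b i - a * q i) (a * ip D q q - 2 * ip D b q + c) (\<lambda>i. x i - q i) = Fq D a b c x"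
  by (simp add: Fq_def ip_lin ip_sym[of D q x] ip_sym[of D q b] algebra_simps)

lemma tmap_props:
  assumes q: "q \<in> euc D"
  shows "\<forall>w\<in>ext_space D. tmap q w \<in> ext_space D"
    "\<forall>w\<in>ext_space D. tmap (\<lambda>i. - q i) w \<in> ext_space D"
    "\<forall>w\<in>ext_space D. tmap q (tmap (\<lambda>i. - q i) w) = w"
  using q by (auto simp: tmap_def ext_space_def euc_def option.map_comp o_def)

lemma tmap_Sset:
  assumes q: "q \<in> euc D"
  shows "Sset D a (\<lambda>i. b i - a * q i) (a * ip D q q - 2 * ip D b q + c) = tmap q ` Sset D a b c"
proof (rule image_by_inverse[OF tmap_props[OF q] Sset_sub Sset_sub], intro ballI)
  fix w assume "w \<in> ext_space D"
  then show "(tmap q w \<in> Sset D a (\<lambda>i. b i - a * q i) (a * ip D q q - 2 * ip D b q + c)) = (w \<in> Sset D a b c)"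
    using q by (auto simp: ext_space_def tmap_def Some_in_Sset None_in_Sset Fq_trans euc_def)
qed

lemma tmap_Sint:
  assumes q: "q \<in> euc D"
  shows "Sint D a (\<lambda>i. b i - a * q i) (a * ip D q q - 2 * ip D b q + c) = tmap q ` Sint D a b c"
proof (rule image_by_inverse[OF tmap_props[OF q] subset_trans[OF Sint_sub_Sset Sset_sub] subset_trans[OF Sint_sub_Sset Sset_sub]], intro ballI)
  fix w assume "w \<in> ext_space D"
  then show "(tmap q w \<in> Sint D a (\<lambda>i. b i - a * q i) (a * ip D q q - 2 * ip D b q + c)) = (w \<in> Sint D a b c)"
    using q by (auto simp: ext_space_def tmap_def Some_in_Sint None_in_Sint Fq_trans euc_def)
qed

lemma tmap_nondeg:
  assumes q: "q \<in> euc D" and nd: "nondeg D a b c"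
  shows "nondeg D a (\<lambda>i. b i - a * q i) (a * ip D q q - 2 * ip D b q + c)"
  using assms unfolding nondeg_def
  by (auto simp: ip_lin ip_sym[of D q b] euc_def algebra_simps)

definition imap :: "nat \<Rightarrow> ext_point \<Rightarrow> ext_point" where
  "imap D w = (case w of None \<Rightarrow> Some (\<lambda>i. 0)
     | Some x \<Rightarrow> if x = (\<lambda>i. 0) then None else Some (\<lambda>i. x i / ip D x x))"

lemma ip_pos_iff: "x \<in> euc D \<Longrightarrow> x \<noteq> (\<lambda>i. 0) \<Longrightarrow> ip D x x > 0"
  using ip_self_eq0[of x D] ip_self_nonneg[of D x] by simp

lemma imap_props:
  shows "\<forall>w\<in>ext_space D. imap D w \<in> ext_space D"
    "\<forall>w\<in>ext_space D. imap D (imap D w) = w"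
proof -
  show "\<forall>w\<in>ext_space D. imap D w \<in> ext_space D"
    by (auto simp: imap_def ext_space_def euc_def split: option.splits)
  show "\<forall>w\<in>ext_space D. imap D (imap D w) = w"
  proof
    fix w assume w: "w \<in> ext_space D"
    show "imap D (imap D w) = w"
    proof (cases w)
      case None then show ?thesis by (simp add: imap_def)
    next
      case (Some x)
      then have x: "x \<in> euc D" using w by (auto simp: ext_space_def)
      show ?thesis
      proof (cases "x = (\<lambda>i. 0)")
        case True then show ?thesis using Some by (simp add: imap_def)
      next
        case False
        have p: "ip D x x > 0" using ip_pos_iff[OF x False] .
        define y where "y = (\<lambda>i. x i / ip D x x)"
        have yy: "ip D y y = 1 / ip D x x" using p by (simp add: y_def ip_lin power2_eq_square)
        have yn: "y \<noteq> (\<lambda>i. 0)" using yy p by auto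
        have "(\<lambda>i. y i / ip D y y) = x" unfolding yy using p by (simp add: y_def)
        then show ?thesis using Some False yn by (simp add: imap_def y_def[symmetric])
      qed
    qed
  qed
qed

lemma Fq_inv:
  assumes "ip D x x > 0"
  shows "Fq D c b a (\<lambda>i. x i / ip D x x) = Fq D a b c x / ip D x x"
  using assms by (simp add: Fq_def ip_lin field_simps power2_eq_square)

lemma imap_mem:
  assumes w: "w \<in> ext_space D"
  shows "imap D w \<in> Sset D c b a \<longleftrightarrow> w \<in> Sset D a b c"
    "imap D w \<in> Sint D c b a \<longleftrightarrow> w \<in> Sint D a b c"
proof -
  have z: "(\<lambda>i. 0::real) \<in> euc D" by (simp add: euc_def)
  have "(imap D w \<in> Sset D c b a \<longleftrightarrow> w \<in> Sset D a b c) \<and> (imap D w \<in> Sint D c b a \<longleftrightarrow> w \<in> Sint D a b c)"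
  proof (cases w)
    case None then show ?thesis using z by (simp add: imap_def Some_in_Sset None_in_Sset Some_in_Sint None_in_Sint Fq_def)
  next
    case (Some x)
    then have x: "x \<in> euc D" using w by (auto simp: ext_space_def)
    show ?thesis
    proof (cases "x = (\<lambda>i. 0)")
      case True then show ?thesis using Some z by (simp add: imap_def Some_in_Sset None_in_Sset Some_in_Sint None_in_Sint Fq_def)
    next
      case False
      have p: "ip D x x > 0" using ip_pos_iff[OF x False] .
      have ye: "(\<lambda>i. x i / ip D x x) \<in> euc D" using x by (auto simp: euc_def)
      show ?thesis using Some False p x ye
        by (simp add: imap_def Some_in_Sset Some_in_Sint Fq_inv divide_le_0_iff divide_less_0_iff)
    qed
  qed
  then show "imap D w \<in> Sset D c b a \<longleftrightarrow> w \<in> Sset D a b c"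
    "imap D w \<in> Sint D c b a \<longleftrightarrow> w \<in> Sint D a b c" by auto
qed

lemma imap_Sset: "Sset D c b a = imap D ` Sset D a b c"
  by (rule image_by_inverse[OF imap_props(1) imap_props(1) imap_props(2) Sset_sub Sset_sub])
     (simp add: imap_mem)

lemma imap_Sint: "Sint D c b a = imap D ` Sint D a b c"
  by (rule image_by_inverse[OF imap_props(1) imap_props(1) imap_props(2)
      subset_trans[OF Sint_sub_Sset Sset_sub] subset_trans[OF Sint_sub_Sset Sset_sub]])
     (simp add: imap_mem)

lemma imap_nondeg: "nondeg D a b c \<Longrightarrow> nondeg D c b a"
  by (simp add: nondeg_def mult.commute)

type_synonym prm = "real \<times> (nat \<Rightarrow> real) \<times> real"

definition SS :: "nat \<Rightarrow> prm \<Rightarrow> ext_point set" where "SS D p = (case p of (a,b,c) \<Rightarrow> Sset D a b c)"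
definition SI :: "nat \<Rightarrow> prm \<Rightarrow> ext_point set" where "SI D p = (case p of (a,b,c) \<Rightarrow> Sint D a b c)"
definition ND :: "nat \<Rightarrow> prm \<Rightarrow> bool" where "ND D p = (case p of (a,b,c) \<Rightarrow> nondeg D a b c)"
definition TR :: "nat \<Rightarrow> (nat \<Rightarrow> real) \<Rightarrow> prm \<Rightarrow> prm" where
  "TR D q p = (case p of (a,b,c) \<Rightarrow> (a, \<lambda>i. b i - a * q i, a * ip D q q - 2 * ip D b q + c))"
definition IV :: "prm \<Rightarrow> prm" where "IV p = (case p of (a,b,c) \<Rightarrow> (c,b,a))"

definition config :: "nat \<Rightarrow> 'v set \<Rightarrow> ('v \<Rightarrow> 'v \<Rightarrow> bool) \<Rightarrow> ('v \<Rightarrow> prm) \<Rightarrow> bool" where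
  "config D V adj \<rho> \<longleftrightarrow> (\<forall>v\<in>V. ND D (\<rho> v)) \<and>
    (\<forall>u\<in>V. \<forall>v\<in>V. u \<noteq> v \<longrightarrow> SS D (\<rho> u) \<noteq> SS D (\<rho> v) \<and> SI D (\<rho> u) \<inter> SI D (\<rho> v) = {}
        \<and> (adj u v \<longleftrightarrow> (\<exists>!z. z \<in> SS D (\<rho> u) \<inter> SS D (\<rho> v))))"

lemma SS_sub: "SS D p \<subseteq> ext_space D" by (auto simp: SS_def Sset_sub split: prod.splits)
lemma SI_sub: "SI D p \<subseteq> ext_space D"
  using Sint_sub_Sset Sset_sub by (fastforce simp: SI_def split: prod.splits)

lemma ex1_iff_sing: "(\<exists>!z. z \<in> A) \<longleftrightarrow> (\<exists>z. A = {z})"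
  by blast

lemma ex1_image: assumes "inj_on f U" "X \<subseteq> U" shows "(\<exists>!z. z \<in> f ` X) \<longleftrightarrow> (\<exists>!z. z \<in> X)"
  unfolding ex1_iff_sing
proof
  assume "\<exists>z. f ` X = {z}"
  then obtain w where w: "f ` X = {w}" by blast
  then obtain x where x: "x \<in> X" by blast
  have "X = {x}"
  proof (intro equalityI subsetI)
    fix y assume y: "y \<in> X"
    have "f y \<in> f ` X" "f x \<in> f ` X" using x y by blast+
    then have "f y = f x" using w by simp
    then show "y \<in> {x}" using assms x y by (simp add: inj_on_eq_iff subsetD)
  qed (use x in simp)
  then show "\<exists>z. X = {z}" ..
qed auto

lemma config_transfer:
  assumes c: "config D V adj \<rho>" and inj: "inj_on \<Psi> (ext_space D)"
    and M: "\<And>p. ND D p \<Longrightarrow> ND D (M p) \<and> SS D (M p) = \<Psi> ` SS D p \<and> SI D (M p) = \<Psi> ` SI D p"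
  shows "config D V adj (\<lambda>v. M (\<rho> v))"
  unfolding config_def
proof (intro conjI ballI impI)
  fix v assume "v \<in> V" then show "ND D (M (\<rho> v))" using c M by (auto simp: config_def)
next
  fix u v assume uv: "u \<in> V" "v \<in> V" "u \<noteq> v"
  have nu: "ND D (\<rho> u)" and nv: "ND D (\<rho> v)" using c uv by (auto simp: config_def)
  have hh: "SS D (\<rho> u) \<noteq> SS D (\<rho> v) \<and> SI D (\<rho> u) \<inter> SI D (\<rho> v) = {}
     \<and> (adj u v \<longleftrightarrow> (\<exists>!z. z \<in> SS D (\<rho> u) \<inter> SS D (\<rho> v)))"
    using c uv unfolding config_def by simp
  note h = hh[THEN conjunct1] hh[THEN conjunct2, THEN conjunct1] hh[THEN conjunct2, THEN conjunct2]
  have e1: "SS D (M (\<rho> u)) = \<Psi> ` SS D (\<rho> u)" "SS D (M (\<rho> v)) = \<Psi> ` SS D (\<rho> v)"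
    "SI D (M (\<rho> u)) = \<Psi> ` SI D (\<rho> u)" "SI D (M (\<rho> v)) = \<Psi> ` SI D (\<rho> v)"
    using M nu nv by auto
  show "SS D (M (\<rho> u)) \<noteq> SS D (M (\<rho> v))"
    unfolding e1 using h(1) inj_on_image_eq_iff[OF inj SS_sub SS_sub] by simp
  have "\<Psi> ` SI D (\<rho> u) \<inter> \<Psi> ` SI D (\<rho> v) = \<Psi> ` (SI D (\<rho> u) \<inter> SI D (\<rho> v))"
    using inj_on_image_Int[OF inj SI_sub SI_sub] by simp
  then show "SI D (M (\<rho> u)) \<inter> SI D (M (\<rho> v)) = {}" unfolding e1 using h(2) by simp
  have i: "\<Psi> ` SS D (\<rho> u) \<inter> \<Psi> ` SS D (\<rho> v) = \<Psi> ` (SS D (\<rho> u) \<inter> SS D (\<rho> v))"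
    using inj_on_image_Int[OF inj SS_sub SS_sub] by simp
  show "adj u v \<longleftrightarrow> (\<exists>!z. z \<in> SS D (M (\<rho> u)) \<inter> SS D (M (\<rho> v)))"
  proof -
    have "SS D (\<rho> u) \<inter> SS D (\<rho> v) \<subseteq> ext_space D" using SS_sub by blast
    from ex1_image[OF inj this] show ?thesis unfolding e1 i h(3) by (rule sym)
  qed
qed

lemma inj_from_inverse: "\<forall>w\<in>U. \<Psi>' (\<Psi> w) = w \<Longrightarrow> inj_on \<Psi> U"
  by (metis inj_onI)

lemma TR_props:
  assumes q: "q \<in> euc D"
  shows "ND D p \<Longrightarrow> ND D (TR D q p) \<and> SS D (TR D q p) = tmap q ` SS D p \<and> SI D (TR D q p) = tmap q ` SI D p"
proof -
  assume nd: "ND D p"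
  obtain a b c where p: "p = (a,b,c)" by (cases p) auto
  have "nondeg D a b c" using nd p by (simp add: ND_def)
  then show ?thesis unfolding p ND_def SS_def SI_def TR_def prod.case
    using tmap_nondeg[OF q] tmap_Sset[OF q] tmap_Sint[OF q] by blast
qed

lemma tmap_inj: "q \<in> euc D \<Longrightarrow> inj_on (tmap q) (ext_space D)"
proof (rule inj_from_inverse[of _ "tmap (\<lambda>i. - q i)"])
  assume q: "q \<in> euc D"
  have "(\<lambda>i. - q i) \<in> euc D" using q by (simp add: euc_neg)
  from tmap_props(3)[OF this] show "\<forall>w\<in>ext_space D. tmap (\<lambda>i. - q i) (tmap q w) = w" by simp
qed

lemma IV_props:
  shows "ND D p \<Longrightarrow> ND D (IV p) \<and> SS D (IV p) = imap D ` SS D p \<and> SI D (IV p) = imap D ` SI D p"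
proof -
  assume nd: "ND D p"
  obtain a b c where p: "p = (a,b,c)" by (cases p) auto
  have "nondeg D a b c" using nd p by (simp add: ND_def)
  then show ?thesis unfolding p ND_def SS_def SI_def IV_def prod.case
    using imap_nondeg imap_Sset imap_Sint by blast
qed

lemma imap_inj: "inj_on (imap D) (ext_space D)"
  by (rule inj_from_inverse[of _ "imap D"]) (use imap_props(2) in simp)

lemma normalize:
  assumes c: "config D V adj \<rho>" and u: "u0 \<in> V" "u1 \<in> V" "u0 \<noteq> u1" "adj u0 u1"
  shows "\<exists>\<rho>'. config D V adj \<rho>' \<and> SS D (\<rho>' u0) \<inter> SS D (\<rho>' u1) = {None}"
proof -
  have "\<exists>!z. z \<in> SS D (\<rho> u0) \<inter> SS D (\<rho> u1)" using c u unfolding config_def by blast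
  then obtain z0 where z0: "SS D (\<rho> u0) \<inter> SS D (\<rho> u1) = {z0}" by blast
  show ?thesis
  proof (cases z0)
    case None then show ?thesis using c z0 by blast
  next
    case (Some q)
    have "z0 \<in> ext_space D" using z0 SS_sub by blast
    then have q: "q \<in> euc D" using Some by (auto simp: ext_space_def)
    define \<rho>2 where "\<rho>2 = (\<lambda>v. IV (TR D q (\<rho> v)))"
    have c1: "config D V adj (\<lambda>v. TR D q (\<rho> v))"
      by (rule config_transfer[OF c tmap_inj[OF q]]) (rule TR_props[OF q])
    have c2: "config D V adj \<rho>2" unfolding \<rho>2_def
      by (rule config_transfer[OF c1 imap_inj]) (rule IV_props)
    have nd: "ND D (\<rho> u0)" "ND D (\<rho> u1)" using c u by (auto simp: config_def)
    have "SS D (\<rho>2 u0) \<inter> SS D (\<rho>2 u1) = imap D ` tmap q ` (SS D (\<rho> u0) \<inter> SS D (\<rho> u1))"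
    proof -
      have a: "SS D (\<rho>2 u0) = imap D ` tmap q ` SS D (\<rho> u0)" "SS D (\<rho>2 u1) = imap D ` tmap q ` SS D (\<rho> u1)"
        using TR_props[OF q] IV_props nd unfolding \<rho>2_def by auto
      have sub: "tmap q ` SS D (\<rho> u0) \<subseteq> ext_space D" "tmap q ` SS D (\<rho> u1) \<subseteq> ext_space D"
        using tmap_props(1)[OF q] SS_sub by blast+
      show ?thesis unfolding a
        by (simp add: inj_on_image_Int[OF imap_inj sub] inj_on_image_Int[OF tmap_inj[OF q] SS_sub SS_sub])
    qed
    also have "\<dots> = {None}" unfolding z0 Some by (simp add: tmap_def imap_def)
    finally show ?thesis using c2 by blast
  qed
qed

definition dsq :: "nat \<Rightarrow> (nat \<Rightarrow> real) \<Rightarrow> (nat \<Rightarrow> real) \<Rightarrow> real" where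
  "dsq D x y = ip D (\<lambda>i. x i - y i) (\<lambda>i. x i - y i)"

definition cball :: "nat \<Rightarrow> (nat \<Rightarrow> real) \<Rightarrow> real \<Rightarrow> ext_point set" where
  "cball D c R = Some ` {x \<in> euc D. dsq D x c \<le> R^2}"
definition oball :: "nat \<Rightarrow> (nat \<Rightarrow> real) \<Rightarrow> real \<Rightarrow> ext_point set" where
  "oball D c R = Some ` {x \<in> euc D. dsq D x c < R^2}"
definition hs :: "nat \<Rightarrow> (nat \<Rightarrow> real) \<Rightarrow> real \<Rightarrow> ext_point set" where
  "hs D m s = insert None (Some ` {x \<in> euc D. ip D m x \<ge> s})"
definition ohs :: "nat \<Rightarrow> (nat \<Rightarrow> real) \<Rightarrow> real \<Rightarrow> ext_point set" where
  "ohs D m s = Some ` {x \<in> euc D. ip D m x > s}"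

lemma dsq_nonneg: "dsq D x y \<ge> 0" by (simp add: dsq_def ip_self_nonneg)

lemma far_neg:
  assumes a: "a < 0"
  shows "\<exists>M. \<forall>y. enorm D y > M \<longrightarrow> Fq D a b c y < 0"
proof -
  define B where "B = enorm D b"
  have B0: "B \<ge> 0" by (simp add: B_def enorm_nonneg)
  define M where "M = (2 * B + \<bar>c\<bar> + 1) / (- a) + 1"
  have "\<forall>y. enorm D y > M \<longrightarrow> Fq D a b c y < 0"
  proof (intro allI impI)
    fix y assume R: "enorm D y > M"
    define R where "R = enorm D y"
    have RM: "R > M" using R by (simp add: R_def)
    have M1: "M \<ge> 1" using a B0 by (simp add: M_def divide_nonneg_neg)
    have R1: "R \<ge> 1" using RM M1 by simp
    have "a * R < a * M" using a RM by simp
    also have "a * M = - (2 * B + \<bar>c\<bar> + 1) + a" using a by (simp add: M_def field_simps)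
    finally have aR: "a * R + 2 * B + \<bar>c\<bar> < 0" using a by simp
    have "Fq D a b c y = a * R^2 - 2 * ip D b y + c"
      by (simp add: Fq_def R_def enorm_sq)
    also have "\<dots> \<le> a * R^2 + 2 * (B * R) + \<bar>c\<bar> * R"
    proof -
      have "- ip D b y \<le> B * R" using cs_enorm_abs[of D b y] by (simp add: B_def R_def)
      moreover have "c \<le> \<bar>c\<bar> * R"
      proof -
        have "\<bar>c\<bar> * 1 \<le> \<bar>c\<bar> * R" using R1 by (intro mult_left_mono) auto
        then show ?thesis by simp
      qed
      ultimately show ?thesis by simp
    qed
    also have "\<dots> = R * (a * R + 2 * B + \<bar>c\<bar>)" by (simp add: power2_eq_square algebra_simps)
    also have "\<dots> < 0" using aR R1 by (simp add: mult_pos_neg)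
    finally show "Fq D a b c y < 0" .
  qed
  then show ?thesis by blast
qed

lemma enorm_unit_scale: "ip D n n = 1 \<Longrightarrow> enorm D (\<lambda>i. t * n i) = \<bar>t\<bar>"
  by (simp add: enorm_scale enorm_def)

lemma ball_form:
  assumes nd: "nondeg D a b c" and a: "a > 0"
  shows "(\<lambda>i. b i / a) \<in> euc D \<and> sqrt (ip D b b - a * c) / a > 0 \<and>
     Sset D a b c = cball D (\<lambda>i. b i / a) (sqrt (ip D b b - a * c) / a) \<and>
     Sint D a b c = oball D (\<lambda>i. b i / a) (sqrt (ip D b b - a * c) / a)"
proof -
  have be: "b \<in> euc D" and disc: "ip D b b - a * c > 0" using nd by (auto simp: nondeg_def)
  define R where "R = sqrt (ip D b b - a * c) / a"
  have R2: "R^2 = (ip D b b - a * c) / a^2" using disc by (simp add: R_def power_divide)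
  have F: "\<And>x. Fq D a b c x = a * (dsq D x (\<lambda>i. b i / a) - R^2)"
    using a unfolding R2 dsq_def by (simp add: Fq_center)
  have "Sset D a b c = cball D (\<lambda>i. b i / a) R"
    unfolding Sset_def cball_def F using a by (simp add: mult_le_0_iff)
  moreover have "Sint D a b c = oball D (\<lambda>i. b i / a) R"
    unfolding Sint_def oball_def F using a by (simp add: mult_less_0_iff)
  moreover have "(\<lambda>i. b i / a) \<in> euc D" using be by (auto simp: euc_def)
  moreover have "R > 0" using disc a by (simp add: R_def)
  ultimately show ?thesis by (simp add: R_def)
qed

lemma not_ball_slab:
  assumes nd: "nondeg D a b c" and a: "a \<le> 0" and n: "n \<in> euc D" "ip D n n = 1"
    and d0: "Sint D a b c \<inter> ohs D n s0 = {}" and d1: "Sint D a b c \<inter> ohs D (\<lambda>i. - n i) (- s1) = {}"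
  shows False
proof -
  have be: "b \<in> euc D" using nd by (simp add: nondeg_def)
  have key: "\<exists>y\<in>euc D. Fq D a b c y < 0 \<and> (ip D n y > s0 \<or> ip D n y < s1)"
  proof (cases "a < 0")
    case True
    obtain M where M: "\<And>y. enorm D y > M \<Longrightarrow> Fq D a b c y < 0" using far_neg[OF True] by blast
    define t where "t = \<bar>M\<bar> + \<bar>s0\<bar> + 1"
    define y where "y = (\<lambda>i. t * n i)"
    have "enorm D y = \<bar>t\<bar>" using n by (simp add: y_def enorm_unit_scale)
    then have "enorm D y > M" by (simp add: t_def)
    moreover have "ip D n y = t" using n by (simp add: y_def ip_lin)
    moreover have "y \<in> euc D" using n by (simp add: y_def euc_scale)
    ultimately show ?thesis using M by (intro bexI[of _ y]) (auto simp: t_def)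
  next
    case False
    then have a0: "a = 0" using a by simp
    have bb: "ip D b b > 0" using nd a0 by (simp add: nondeg_def)
    have F: "\<And>y. Fq D a b c y = c - 2 * ip D b y" using a0 by (simp add: Fq_def)
    consider "ip D n b > 0" | "ip D n b < 0" | "ip D n b = 0" by linarith
    then show ?thesis
    proof cases
      case 1
      define t where "t = (\<bar>c\<bar> + 1) / ip D n b + \<bar>s0\<bar> + 1"
      have t: "t * ip D n b \<ge> \<bar>c\<bar> + 1" "t > s0"
      proof -
        have "t * ip D n b = \<bar>c\<bar> + 1 + (\<bar>s0\<bar> + 1) * ip D n b" using 1 by (simp add: t_def field_simps)
        moreover have "(\<bar>s0\<bar> + 1) * ip D n b \<ge> 0" using 1 by simp
        ultimately show "t * ip D n b \<ge> \<bar>c\<bar> + 1" by simp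
        have "(\<bar>c\<bar> + 1) / ip D n b \<ge> 0" using 1 by simp
        then show "t > s0" by (simp add: t_def)
      qed
      define y where "y = (\<lambda>i. t * n i)"
      have "ip D b y = t * ip D n b" by (simp add: y_def ip_lin ip_sym[of D b n])
      moreover have "ip D n y = t" using n by (simp add: y_def ip_lin)
      moreover have "y \<in> euc D" using n by (simp add: y_def euc_scale)
      ultimately show ?thesis using t by (intro bexI[of _ y]) (auto simp: F)
    next
      case 2
      define t where "t = (\<bar>c\<bar> + 1) / (- ip D n b) + \<bar>s1\<bar> + 1"
      have t: "t * (- ip D n b) \<ge> \<bar>c\<bar> + 1" "- t < s1"
      proof -
        have "t * (- ip D n b) = \<bar>c\<bar> + 1 + (\<bar>s1\<bar> + 1) * (- ip D n b)" using 2 by (simp add: t_def field_simps)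
        moreover have "(\<bar>s1\<bar> + 1) * (- ip D n b) \<ge> 0" using 2 by (intro mult_nonneg_nonneg) auto
        ultimately show "t * (- ip D n b) \<ge> \<bar>c\<bar> + 1" by simp
        have "(\<bar>c\<bar> + 1) / (- ip D n b) \<ge> 0" using 2 by (intro divide_nonneg_nonneg) auto
        then show "- t < s1" by (simp add: t_def)
      qed
      define y where "y = (\<lambda>i. (- t) * n i)"
      have "ip D b y = t * (- ip D n b)" by (simp add: y_def ip_lin ip_sym[of D b n])
      moreover have "ip D n y = - t" using n by (simp add: y_def ip_lin)
      moreover have "y \<in> euc D" using n by (simp add: y_def euc_def)
      ultimately show ?thesis using t by (intro bexI[of _ y]) (auto simp: F)
    next
      case 3
      define t where "t = (\<bar>c\<bar> + 1) / ip D b b"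
      have t: "t * ip D b b = \<bar>c\<bar> + 1" using bb by (simp add: t_def)
      define y where "y = (\<lambda>i. t * b i + (s0 + 1) * n i)"
      have "ip D b y = t * ip D b b" using 3 by (simp add: y_def ip_lin ip_sym[of D b n])
      moreover have "ip D n y = s0 + 1" using n 3 by (simp add: y_def ip_lin)
      moreover have "y \<in> euc D" using n be by (simp add: y_def euc_def)
      ultimately show ?thesis using t by (intro bexI[of _ y]) (auto simp: F)
    qed
  qed
  then obtain y where y: "y \<in> euc D" "Fq D a b c y < 0" "ip D n y > s0 \<or> ip D n y < s1" by blast
  have "Some y \<in> Sint D a b c" using y by (simp add: Some_in_Sint)
  moreover have "Some y \<in> ohs D n s0 \<or> Some y \<in> ohs D (\<lambda>i. - n i) (- s1)"
    using y by (auto simp: ohs_def ip_lin)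
  ultimately show False using d0 d1 by blast
qed

lemma enorm_le_of_dsq: "dsq D x c \<le> R^2 \<Longrightarrow> R \<ge> 0 \<Longrightarrow> enorm D (\<lambda>i. x i - c i) \<le> R"
  unfolding dsq_def enorm_def by (simp add: real_sqrt_le_iff real_le_lsqrt real_sqrt_le_mono sqrt_le_D)

lemma ball_halfspace:
  assumes m: "m \<in> euc D" "ip D m m = 1" and c: "ctr \<in> euc D" and R: "R > 0"
    and d: "oball D ctr R \<inter> ohs D m s = {}" and t: "\<exists>!z. z \<in> cball D ctr R \<inter> hs D m s"
  shows "ip D m ctr + R = s"
proof -
  have le: "ip D m ctr + R \<le> s"
  proof (rule ccontr)
    assume "\<not> ip D m ctr + R \<le> s"
    define \<delta> where "\<delta> = ip D m ctr + R - s"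
    have \<delta>: "\<delta> > 0" using \<open>\<not> _\<close> by (simp add: \<delta>_def)
    define \<tau> where "\<tau> = R - min \<delta> R / 2"
    have \<tau>: "0 \<le> \<tau>" "\<tau> < R" "\<tau> > R - \<delta>" using \<delta> R by (auto simp: \<tau>_def min_def)
    define x where "x = (\<lambda>i. ctr i + \<tau> * m i)"
    have xe: "x \<in> euc D" using m c by (auto simp: x_def euc_def)
    have "dsq D x ctr = \<tau>^2" using m by (simp add: dsq_def x_def ip_lin power2_eq_square)
    also have "\<tau>^2 < R^2" using \<tau> by (simp add: power_strict_mono)
    finally have "Some x \<in> oball D ctr R" using xe by (simp add: oball_def)
    moreover have "ip D m x = ip D m ctr + \<tau>" using m by (simp add: x_def ip_lin)
    then have "Some x \<in> ohs D m s" using xe \<tau> by (simp add: ohs_def \<delta>_def)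
    ultimately show False using d by blast
  qed
  have ge: "ip D m ctr + R \<ge> s"
  proof (rule ccontr)
    assume lt: "\<not> ip D m ctr + R \<ge> s"
    have "cball D ctr R \<inter> hs D m s = {}"
    proof (rule ccontr)
      assume "cball D ctr R \<inter> hs D m s \<noteq> {}"
      then obtain x where x: "x \<in> euc D" "dsq D x ctr \<le> R^2" "ip D m x \<ge> s"
        by (auto simp: cball_def hs_def)
      have "ip D m (\<lambda>i. x i - ctr i) \<le> enorm D m * enorm D (\<lambda>i. x i - ctr i)" by (rule cs_enorm)
      also have "\<dots> \<le> R" using m enorm_le_of_dsq[OF x(2)] R by (simp add: enorm_def)
      finally have "ip D m x \<le> ip D m ctr + R" by (simp add: ip_lin)
      then show False using x lt by simp
    qed
    then show False using t by blast
  qed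
  show ?thesis using le ge by simp
qed

lemma ip_mid_right: "ip D x (\<lambda>i. (c1 i + c2 i) / 2) = (ip D x c1 + ip D x c2) / 2"
  by (simp only: ip_div_right ip_add_right)
lemma ip_mid_left: "ip D (\<lambda>i. (c1 i + c2 i) / 2) x = (ip D c1 x + ip D c2 x) / 2"
  by (simp only: ip_div_left ip_add_left)
lemma ip_mid_mid: "ip D (\<lambda>i. (c1 i + c2 i) / 2) (\<lambda>i. (c1 i + c2 i) / 2) = (ip D c1 c1 + 2 * ip D c1 c2 + ip D c2 c2) / 4"
  by (simp only: ip_div_right ip_add_right ip_div_left ip_add_left ip_sym[of D c2 c1]) (simp add: field_simps)

lemma dsq_expand: "dsq D x y = ip D x x - 2 * ip D x y + ip D y y"
  unfolding dsq_def by (rule ip_diff_sq)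

lemma parallelogram:
  "dsq D x c1 + dsq D x c2 = 2 * dsq D x (\<lambda>i. (c1 i + c2 i) / 2) + dsq D c1 c2 / 2"
  by (simp only: dsq_expand ip_mid_right ip_mid_left ip_sym[of D c2 c1]) (simp add: field_simps)

lemma dsq_mid: "dsq D (\<lambda>i. (c1 i + c2 i) / 2) c1 = dsq D c1 c2 / 4"
  "dsq D (\<lambda>i. (c1 i + c2 i) / 2) c2 = dsq D c1 c2 / 4"
  by (simp_all only: dsq_expand ip_mid_mid ip_mid_left ip_sym[of D c2 c1]) (simp_all add: field_simps)

lemma dsq_sym: "dsq D x y = dsq D y x"
  unfolding dsq_expand by (simp add: ip_sym[of D y x])

lemma ball_ball_disj:
  assumes c: "c1 \<in> euc D" "c2 \<in> euc D" and R: "R > 0" and d: "oball D c1 R \<inter> oball D c2 R = {}"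
  shows "dsq D c1 c2 \<ge> 4 * R^2"
proof (rule ccontr)
  assume "\<not> dsq D c1 c2 \<ge> 4 * R^2"
  define mid where "mid = (\<lambda>i. (c1 i + c2 i) / 2)"
  have me: "mid \<in> euc D" using c by (auto simp: mid_def euc_def)
  have "dsq D mid c1 < R^2" "dsq D mid c2 < R^2" using \<open>\<not> _\<close> by (simp_all add: mid_def dsq_mid)
  then have "Some mid \<in> oball D c1 R \<inter> oball D c2 R" using me by (simp add: oball_def)
  then show False using d by blast
qed

lemma ball_ball_tang:
  assumes c: "c1 \<in> euc D" "c2 \<in> euc D" and R: "R > 0" and ge: "dsq D c1 c2 \<ge> 4 * R^2"
  shows "(\<exists>!z. z \<in> cball D c1 R \<inter> cball D c2 R) \<longleftrightarrow> dsq D c1 c2 = 4 * R^2"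
proof
  assume ex: "\<exists>!z. z \<in> cball D c1 R \<inter> cball D c2 R"
  then obtain z where "z \<in> cball D c1 R \<inter> cball D c2 R" by blast
  then obtain x where x: "dsq D x c1 \<le> R^2" "dsq D x c2 \<le> R^2" by (auto simp: cball_def)
  have "dsq D c1 c2 / 2 \<le> dsq D x c1 + dsq D x c2"
    using parallelogram[of D x c1 c2] dsq_nonneg[of D x] by simp
  then show "dsq D c1 c2 = 4 * R^2" using x ge by simp
next
  assume eq: "dsq D c1 c2 = 4 * R^2"
  define mid where "mid = (\<lambda>i. (c1 i + c2 i) / 2)"
  have me: "mid \<in> euc D" using c by (auto simp: mid_def euc_def)
  have "dsq D mid c1 = R^2" "dsq D mid c2 = R^2" using eq by (simp_all add: mid_def dsq_mid)
  then have inm: "Some mid \<in> cball D c1 R \<inter> cball D c2 R" using me by (simp add: cball_def)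
  have "\<forall>z \<in> cball D c1 R \<inter> cball D c2 R. z = Some mid"
  proof
    fix z assume "z \<in> cball D c1 R \<inter> cball D c2 R"
    then obtain x where z: "z = Some x" and x: "x \<in> euc D" "dsq D x c1 \<le> R^2" "dsq D x c2 \<le> R^2"
      by (auto simp: cball_def)
    have "2 * dsq D x mid \<le> 0" using parallelogram[of D x c1 c2] x eq by (simp add: mid_def)
    then have "dsq D x mid = 0" using dsq_nonneg[of D x mid] by simp
    moreover have "(\<lambda>i. x i - mid i) \<in> euc D" using euc_diff[OF x(1) me] .
    ultimately have "(\<lambda>i. x i - mid i) = (\<lambda>i. 0)" using ip_self_eq0[of "\<lambda>i. x i - mid i" D]
      unfolding dsq_def by blast
    then have "x = mid" by (simp add: fun_eq_iff)
    then show "z = Some mid" using z by simp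
  qed
  then show "\<exists>!z. z \<in> cball D c1 R \<inter> cball D c2 R"
    by (intro ex1I[of _ "Some mid"] inm) simp
qed

lemma neg_half_meet:
  assumes a: "a < 0" and nd: "nondeg D 0 b' c'"
  shows "Sint D a b c \<inter> Sint D 0 b' c' \<noteq> {}"
proof -
  obtain M where M: "\<And>y. enorm D y > M \<Longrightarrow> Fq D a b c y < 0" using far_neg[OF a] by blast
  have bb: "ip D b' b' > 0" using nd by (simp add: nondeg_def)
  have be: "b' \<in> euc D" using nd by (simp add: nondeg_def)
  define B where "B = enorm D b'"
  have B0: "B > 0" using bb by (simp add: B_def enorm_def)
  define t where "t = (\<bar>c'\<bar> + 1) / ip D b' b' + (\<bar>M\<bar> + 1) / B"
  have t0: "t > 0" using bb B0 by (simp add: t_def add_pos_pos)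
  define y where "y = (\<lambda>i. t * b' i)"
  have ye: "y \<in> euc D" using be by (simp add: y_def euc_scale)
  have "enorm D y = t * B" using t0 by (simp add: y_def enorm_scale B_def)
  also have "t * B \<ge> \<bar>M\<bar> + 1"
  proof -
    have "t * B = (\<bar>c'\<bar> + 1) / ip D b' b' * B + (\<bar>M\<bar> + 1)" using B0 by (simp add: t_def field_simps)
    moreover have "(\<bar>c'\<bar> + 1) / ip D b' b' * B \<ge> 0" using bb B0 by simp
    ultimately show ?thesis by simp
  qed
  finally have "Fq D a b c y < 0" using M by simp
  moreover have "Fq D 0 b' c' y < 0"
  proof -
    have "t * ip D b' b' = \<bar>c'\<bar> + 1 + (\<bar>M\<bar> + 1) / B * ip D b' b'" using bb by (simp add: t_def field_simps)
    moreover have "(\<bar>M\<bar> + 1) / B * ip D b' b' \<ge> 0" using bb B0 by simp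
    moreover have "Fq D 0 b' c' y = c' - 2 * (t * ip D b' b')" by (simp add: Fq_def y_def ip_lin)
    ultimately show ?thesis by simp
  qed
  ultimately have "Some y \<in> Sint D a b c \<inter> Sint D 0 b' c'" using ye by (simp add: Some_in_Sint)
  then show ?thesis by blast
qed

lemma half_form:
  assumes nd: "nondeg D 0 b c"
  shows "enorm D b > 0 \<and> (\<lambda>i. b i / enorm D b) \<in> euc D \<and> ip D (\<lambda>i. b i / enorm D b) (\<lambda>i. b i / enorm D b) = 1 \<and>
     Sset D 0 b c = hs D (\<lambda>i. b i / enorm D b) (c / (2 * enorm D b)) \<and>
     Sint D 0 b c = ohs D (\<lambda>i. b i / enorm D b) (c / (2 * enorm D b))"
proof -
  have bb: "ip D b b > 0" using nd by (simp add: nondeg_def)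
  have be: "b \<in> euc D" using nd by (simp add: nondeg_def)
  define B where "B = enorm D b"
  have B0: "B > 0" using bb by (simp add: B_def enorm_def)
  have BB: "B * B = ip D b b" using enorm_sq[of D b] by (simp add: B_def power2_eq_square)
  define n where "n = (\<lambda>i. b i / B)"
  have ne: "n \<in> euc D" using be by (auto simp: n_def euc_def)
  have nn: "ip D n n = 1" using B0 BB bb by (simp add: n_def ip_lin)
  have F: "\<And>x. Fq D 0 b c x = c - 2 * B * ip D n x" using B0 by (simp add: Fq_def n_def ip_lin)
  have F1: "\<And>x. Fq D 0 b c x \<le> 0 \<longleftrightarrow> ip D n x \<ge> c / (2 * B)" unfolding F using B0 by (simp add: field_simps)
  have F2: "\<And>x. Fq D 0 b c x < 0 \<longleftrightarrow> ip D n x > c / (2 * B)" unfolding F using B0 by (simp add: field_simps)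
  have "Sset D 0 b c = hs D n (c / (2 * B))" unfolding Sset_def hs_def F1 by simp
  moreover have "Sint D 0 b c = ohs D n (c / (2 * B))" unfolding Sint_def ohs_def F2 by simp
  ultimately show ?thesis using B0 ne nn by (simp add: B_def n_def)
qed

lemma slab:
  assumes nd0: "nondeg D a0 b0 c0" and nd1: "nondeg D a1 b1 c1"
    and di: "Sint D a0 b0 c0 \<inter> Sint D a1 b1 c1 = {}" and ss: "Sset D a0 b0 c0 \<inter> Sset D a1 b1 c1 = {None}"
  shows "\<exists>n s0 s1. n \<in> euc D \<and> ip D n n = 1 \<and> s1 < s0 \<and>
     Sset D a0 b0 c0 = hs D n s0 \<and> Sint D a0 b0 c0 = ohs D n s0 \<and>
     Sset D a1 b1 c1 = hs D (\<lambda>i. - n i) (- s1) \<and> Sint D a1 b1 c1 = ohs D (\<lambda>i. - n i) (- s1)"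
proof -
  have "None \<in> Sset D a0 b0 c0" "None \<in> Sset D a1 b1 c1" using ss by auto
  then have a: "a0 \<le> 0" "a1 \<le> 0" by (auto simp: None_in_Sset)
  have a0: "a0 = 0"
  proof (rule ccontr)
    assume "a0 \<noteq> 0"
    then have "a0 < 0" using a by simp
    show False
    proof (cases "a1 = 0")
      case True
      then show False using neg_half_meet[OF \<open>a0 < 0\<close>, of D b1 c1 b0 c0] nd1 di by simp
    next
      case False
      then have "a1 < 0" using a by simp
      then have "None \<in> Sint D a0 b0 c0 \<inter> Sint D a1 b1 c1" using \<open>a0 < 0\<close> by (simp add: None_in_Sint)
      then show False using di by simp
    qed
  qed
  have a1: "a1 = 0"
  proof (rule ccontr)
    assume "a1 \<noteq> 0"
    then have "a1 < 0" using a by simp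
    then show False using neg_half_meet[OF \<open>a1 < 0\<close>, of D b0 c0 b1 c1] nd0 di a0 by blast
  qed
  have h0: "nondeg D 0 b0 c0" and h1: "nondeg D 0 b1 c1" using nd0 nd1 a0 a1 by simp_all
  have b0e: "b0 \<in> euc D" and b1e: "b1 \<in> euc D" using nd0 nd1 by (simp_all add: nondeg_def)
  define B0 where "B0 = enorm D b0"
  define B1 where "B1 = enorm D b1"
  have B0: "B0 > 0" and B1: "B1 > 0" using half_form[OF h0] half_form[OF h1] by (simp_all add: B0_def B1_def)
  have BB0: "ip D b0 b0 = B0 * B0" using enorm_sq[of D b0] by (simp add: B0_def power2_eq_square)
  have BB1: "ip D b1 b1 = B1 * B1" using enorm_sq[of D b1] by (simp add: B1_def power2_eq_square)
  define \<kappa> where "\<kappa> = ip D b0 b1 + B0 * B1"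
  have \<kappa>0: "\<kappa> \<ge> 0" using cs_enorm_abs[of D b0 b1] by (simp add: \<kappa>_def B0_def B1_def)
  define v where "v = (\<lambda>i. B0 * b1 i + B1 * b0 i)"
  have ve: "v \<in> euc D" using b0e b1e by (auto simp: v_def euc_def)
  have v0: "ip D b0 v = B0 * \<kappa>" "ip D b1 v = B1 * \<kappa>"
    by (simp_all add: v_def ip_lin \<kappa>_def BB0 BB1 ip_sym[of D b1 b0] algebra_simps)
  have \<kappa>z: "\<kappa> = 0"
  proof (rule ccontr)
    assume "\<kappa> \<noteq> 0"
    then have kp: "\<kappa> > 0" using \<kappa>0 by simp
    define t where "t = (\<bar>c0\<bar> + 1) / (B0 * \<kappa>) + (\<bar>c1\<bar> + 1) / (B1 * \<kappa>)"
    define y where "y = (\<lambda>i. t * v i)"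
    have ye: "y \<in> euc D" using ve by (simp add: y_def euc_scale)
    have t0: "t * (B0 * \<kappa>) \<ge> \<bar>c0\<bar> + 1"
    proof -
      have "t * (B0 * \<kappa>) = \<bar>c0\<bar> + 1 + (\<bar>c1\<bar> + 1) / (B1 * \<kappa>) * (B0 * \<kappa>)"
        using B0 kp by (simp add: t_def field_simps)
      moreover have "(\<bar>c1\<bar> + 1) / (B1 * \<kappa>) * (B0 * \<kappa>) \<ge> 0" using B0 B1 kp by simp
      ultimately show ?thesis by simp
    qed
    have t1: "t * (B1 * \<kappa>) \<ge> \<bar>c1\<bar> + 1"
    proof -
      have "t * (B1 * \<kappa>) = (\<bar>c0\<bar> + 1) / (B0 * \<kappa>) * (B1 * \<kappa>) + (\<bar>c1\<bar> + 1)"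
        using B1 kp by (simp add: t_def field_simps)
      moreover have "(\<bar>c0\<bar> + 1) / (B0 * \<kappa>) * (B1 * \<kappa>) \<ge> 0" using B0 B1 kp by simp
      ultimately show ?thesis by simp
    qed
    have "Fq D 0 b0 c0 y = c0 - 2 * (t * (B0 * \<kappa>))" by (simp add: Fq_def y_def ip_lin v0)
    then have f0: "Fq D 0 b0 c0 y < 0" using t0 by simp
    have "Fq D 0 b1 c1 y = c1 - 2 * (t * (B1 * \<kappa>))" by (simp add: Fq_def y_def ip_lin v0)
    then have f1: "Fq D 0 b1 c1 y < 0" using t1 by simp
    have "Some y \<in> Sint D a0 b0 c0 \<inter> Sint D a1 b1 c1" using f0 f1 ye a0 a1 by (simp add: Some_in_Sint)
    then show False using di by simp
  qed
  have "ip D v v = 2 * B0 * B1 * \<kappa>"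
    by (simp add: v_def ip_lin \<kappa>_def BB0 BB1 ip_sym[of D b1 b0] algebra_simps)
  then have "v = (\<lambda>i. 0)" using \<kappa>z ip_self_eq0[OF ve] by simp
  then have vb: "\<And>i. B0 * b1 i = - (B1 * b0 i)" by (simp add: v_def fun_eq_iff add_eq_0_iff)
  define n where "n = (\<lambda>i. b0 i / B0)"
  have n1: "(\<lambda>i. b1 i / B1) = (\<lambda>i. - n i)"
  proof
    fix i
    have "b1 i = - (B1 * b0 i) / B0" using vb[of i] B0 by (simp add: field_simps)
    then show "b1 i / B1 = - n i" using B1 by (simp add: n_def)
  qed
  define s0 where "s0 = c0 / (2 * B0)"
  define s1 where "s1 = - (c1 / (2 * B1))"
  have f0: "Sset D a0 b0 c0 = hs D n s0" "Sint D a0 b0 c0 = ohs D n s0" "n \<in> euc D" "ip D n n = 1"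
    using half_form[OF h0] a0 by (simp_all add: n_def s0_def B0_def)
  have f1: "Sset D a1 b1 c1 = hs D (\<lambda>i. - n i) (- s1)" "Sint D a1 b1 c1 = ohs D (\<lambda>i. - n i) (- s1)"
    using half_form[OF h1] a1 n1 by (simp_all add: s1_def B1_def)
  have "s1 < s0"
  proof (rule ccontr)
    assume "\<not> s1 < s0"
    define x where "x = (\<lambda>i. s0 * n i)"
    have xe: "x \<in> euc D" using f0 by (simp add: x_def euc_scale)
    have "ip D n x = s0" using f0 by (simp add: x_def ip_lin)
    then have "Some x \<in> hs D n s0 \<inter> hs D (\<lambda>i. - n i) (- s1)"
      using xe \<open>\<not> s1 < s0\<close> by (simp add: hs_def ip_lin)
    then show False using ss f0 f1 by auto
  qed
  then show ?thesis using f0 f1 by blast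
qed

lemma slab_ball:
  assumes n: "n \<in> euc D" "ip D n n = 1" "s1 < s0" and nd: "nondeg D a b c"
    and d0: "Sint D a b c \<inter> ohs D n s0 = {}" and d1: "Sint D a b c \<inter> ohs D (\<lambda>i. - n i) (- s1) = {}"
    and t0: "\<exists>!z. z \<in> Sset D a b c \<inter> hs D n s0" and t1: "\<exists>!z. z \<in> Sset D a b c \<inter> hs D (\<lambda>i. - n i) (- s1)"
  shows "\<exists>ctr. ctr \<in> euc D \<and> ip D n ctr = (s0 + s1) / 2 \<and> Sset D a b c = cball D ctr ((s0 - s1) / 2)
     \<and> Sint D a b c = oball D ctr ((s0 - s1) / 2)"
proof -
  have a: "a > 0"
  proof (rule ccontr)
    assume "\<not> a > 0"
    then show False using not_ball_slab[OF nd _ n(1,2) d0 d1] by simp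
  qed
  define ctr where "ctr = (\<lambda>i. b i / a)"
  define R where "R = sqrt (ip D b b - a * c) / a"
  have bf: "ctr \<in> euc D" "R > 0" "Sset D a b c = cball D ctr R" "Sint D a b c = oball D ctr R"
    using ball_form[OF nd a] by (simp_all add: ctr_def R_def)
  have nn: "(\<lambda>i. - n i) \<in> euc D" "ip D (\<lambda>i. - n i) (\<lambda>i. - n i) = 1" using n by (simp_all add: euc_neg ip_lin)
  have e0: "ip D n ctr + R = s0"
    by (rule ball_halfspace[OF n(1,2) bf(1,2)]) (use d0 t0 bf in simp_all)
  have e1: "ip D (\<lambda>i. - n i) ctr + R = - s1"
    by (rule ball_halfspace[OF nn bf(1,2)]) (use d1 t1 bf in simp_all)
  have "ip D n ctr = (s0 + s1) / 2" "R = (s0 - s1) / 2" using e0 e1 by (simp_all add: ip_lin)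
  then show ?thesis using bf by blast
qed

lemma polar: "ip D (\<lambda>j. a j - w j) (\<lambda>j. b j - w j) = (dsq D a w + dsq D b w - dsq D a b) / 2"
  unfolding dsq_expand by (simp add: ip_lin ip_sym[of D w a] ip_sym[of D w b] ip_sym[of D b a] field_simps)

lemma dsq_self[simp]: "dsq D x x = 0" by (simp add: dsq_def)

lemma embed_alg:
  fixes \<alpha> :: nat and R s :: real
  assumes "\<alpha> \<ge> 1" "R > 0"
  shows "(4 * R^2 - s / 2 - real (\<alpha> - 1) * (2 * R^2)^2 / (2 * R^2 + real (\<alpha> - 1) * (2 * R^2)))
      / (2 * R^2 * (real \<alpha> + 1) / real \<alpha>) = 1 - s * real \<alpha> / (4 * R^2 * (real \<alpha> + 1))"
proof -
  have a: "real (\<alpha> - 1) = real \<alpha> - 1" using assms by (simp add: of_nat_diff)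
  have a1: "real \<alpha> \<ge> 1" using assms by simp
  have "2 * R^2 + (real \<alpha> - 1) * (2 * R^2) = 2 * R^2 * real \<alpha>" by (simp add: algebra_simps)
  then have k: "real (\<alpha> - 1) * (2 * R^2)^2 / (2 * R^2 + real (\<alpha> - 1) * (2 * R^2)) = 2 * R^2 * (real \<alpha> - 1) / real \<alpha>"
    unfolding a using assms a1 by (simp add: field_simps power2_eq_square)
  define A where "A = real \<alpha>"
  have A0: "A > 0" using a1 by (simp add: A_def)
  define Q where "Q = 2 * R^2 * (A + 1)"
  have Q0: "Q > 0" using A0 assms by (simp add: Q_def)
  have n1: "4 * R^2 - s / 2 - 2 * R^2 * (A - 1) / A = (Q - s * A / 2) / A"
    using A0 by (simp add: Q_def field_simps)
  have n2: "(Q - s * A / 2) / A / (Q / A) = 1 - s * A / (2 * Q)"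
    using A0 Q0 by (simp add: field_simps)
  have "(4 * R^2 - s / 2 - 2 * R^2 * (A - 1) / A) / (Q / A) = 1 - s * A / (2 * Q)"
    unfolding n1 n2 ..
  then show ?thesis unfolding k by (simp add: A_def Q_def algebra_simps)
qed

lemma embed:
  fixes d \<alpha> :: nat and R m :: real and kc :: "nat \<Rightarrow> nat \<Rightarrow> real" and yc :: "'a \<Rightarrow> nat \<Rightarrow> real"
  assumes \<alpha>: "\<alpha> \<ge> 1" and R: "R > 0" and n: "n \<in> euc (d+\<alpha>)" "ip (d+\<alpha>) n n = 1"
    and kce: "\<forall>i\<in>{2..<\<alpha>+2}. kc i \<in> euc (d+\<alpha>) \<and> ip (d+\<alpha>) n (kc i) = m"
    and yce: "\<forall>v\<in>VG. yc v \<in> euc (d+\<alpha>) \<and> ip (d+\<alpha>) n (yc v) = m"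
    and kk: "\<forall>i\<in>{2..<\<alpha>+2}. \<forall>j\<in>{2..<\<alpha>+2}. i \<noteq> j \<longrightarrow> dsq (d+\<alpha>) (kc i) (kc j) = 4 * R^2"
    and yk: "\<forall>v\<in>VG. \<forall>i\<in>{2..<\<alpha>+2}. dsq (d+\<alpha>) (yc v) (kc i) = 4 * R^2"
  shows "\<exists>P. \<forall>v\<in>VG. P v \<in> euc d \<and> (\<forall>w\<in>VG. ip d (P v) (P w)
      = 1 - dsq (d+\<alpha>) (yc v) (yc w) * real \<alpha> / (4 * R^2 * (real \<alpha> + 1)))"
proof -
  define D where "D = d + \<alpha>"
  define oo where "oo = kc 2"
  define dif where "dif = (\<lambda>x j. x j - oo j)"
  have k2: "2 \<in> {2..<\<alpha>+2}" using \<alpha> by simp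
  have oe: "oo \<in> euc D" using kce k2 by (simp add: oo_def D_def)
  have no: "ip D n oo = m" using kce k2 by (simp add: oo_def D_def)
  have dife: "\<And>x. x \<in> euc D \<Longrightarrow> dif x \<in> euc D" using oe by (simp add: dif_def euc_diff)
  have difn: "\<And>x. ip D n x = m \<Longrightarrow> ip D (dif x) n = 0" using no by (simp add: dif_def ip_lin ip_sym[of D _ n])
  obtain g where g1: "\<forall>x\<in>euc D. g x \<in> euc (D-1)"
    and g2: "\<forall>x\<in>euc D. \<forall>z\<in>euc D. ip (D-1) (g x) (g z) = ip D x z - ip D x n * ip D z n / ip D n n"
    using reduce_step[of n D] n by (auto simp: D_def)
  have gip: "\<And>x z. x \<in> euc D \<Longrightarrow> z \<in> euc D \<Longrightarrow> ip D n x = m \<Longrightarrow> ip D n z = m \<Longrightarrow>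
      ip (D-1) (g (dif x)) (g (dif z)) = ip D (dif x) (dif z)"
    using g2 dife difn by simp
  define C where "C = map (\<lambda>i. g (dif (kc i))) [3..<\<alpha>+2]"
  have setC: "set C = (\<lambda>i. g (dif (kc i))) ` {3..<\<alpha>+2}" by (simp only: C_def set_map set_upt)
  have lenC: "length C = \<alpha> - 1" by (simp only: C_def length_map length_upt)
  have Cnth: "\<And>i. i < length C \<Longrightarrow> C ! i = g (dif (kc (i + 3)))"
  proof -
    fix i assume i: "i < length C"
    then have i': "i < length [3..<\<alpha>+2]" by (simp only: C_def length_map)
    then have "3 + i < \<alpha> + 2" by (simp only: length_upt)
    then have "[3..<\<alpha>+2] ! i = 3 + i" by (rule nth_upt)
    then show "C ! i = g (dif (kc (i + 3)))" unfolding C_def nth_map[OF i'] by (simp add: add.commute)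
  qed
  have kcD: "\<And>i. i \<in> {2..<\<alpha>+2} \<Longrightarrow> kc i \<in> euc D \<and> ip D n (kc i) = m" using kce by (simp add: D_def)
  have ycD: "\<And>v. v \<in> VG \<Longrightarrow> yc v \<in> euc D \<and> ip D n (yc v) = m" using yce by (simp add: D_def)
  define Y where "Y = (\<lambda>v. g (dif (yc v))) ` VG"
  have "\<exists>f. (\<forall>y\<in>Y. f y \<in> euc (D - 1 - length C)) \<and>
      (\<forall>y\<in>Y. \<forall>z\<in>Y. ip (D - 1 - length C) (f y) (f z)
           = ip (D - 1) y z - real (length C) * (2 * R^2)^2 / (2 * R^2 + real (length C) * (2 * R^2)))"
  proof (rule simplex_reduce)
    show "\<forall>c\<in>set C. c \<in> euc (D - 1)" using g1 dife kcD unfolding setC by auto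
    show "\<forall>i<length C. \<forall>j<length C. ip (D - 1) (C ! i) (C ! j) = (if i = j then 2 * R^2 + 2 * R^2 else 2 * R^2)"
    proof (intro allI impI)
      fix i j assume ij: "i < length C" "j < length C"
      have ii: "i + 3 \<in> {2..<\<alpha>+2}" "j + 3 \<in> {2..<\<alpha>+2}" using ij lenC by auto
      have "ip (D - 1) (C ! i) (C ! j) = ip D (dif (kc (i+3))) (dif (kc (j+3)))"
        using ij Cnth gip kcD ii by simp
      also have "\<dots> = (dsq D (kc (i+3)) oo + dsq D (kc (j+3)) oo - dsq D (kc (i+3)) (kc (j+3))) / 2"
        unfolding dif_def by (rule polar)
      also have "\<dots> = (if i = j then 2 * R^2 + 2 * R^2 else 2 * R^2)"
        using kk ii k2 unfolding oo_def D_def by auto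
      finally show "ip (D - 1) (C ! i) (C ! j) = (if i = j then 2 * R^2 + 2 * R^2 else 2 * R^2)" .
    qed
    show "Y \<subseteq> euc (D - 1)" using g1 dife ycD by (auto simp: Y_def)
    show "\<forall>y\<in>Y. \<forall>c\<in>set C. ip (D - 1) y c = 2 * R^2"
    proof (intro ballI)
      fix y c assume y: "y \<in> Y" and c: "c \<in> set C"
      obtain v where v: "v \<in> VG" "y = g (dif (yc v))" using y by (auto simp: Y_def)
      obtain i where i: "i \<in> {3..<\<alpha>+2}" "c = g (dif (kc i))" using c unfolding setC by blast
      have i2: "i \<in> {2..<\<alpha>+2}" using i by auto
      have "ip (D - 1) y c = ip D (dif (yc v)) (dif (kc i))" using v i gip ycD kcD i2 by simp
      also have "\<dots> = (dsq D (yc v) oo + dsq D (kc i) oo - dsq D (yc v) (kc i)) / 2"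
        unfolding dif_def by (rule polar)
      also have "\<dots> = 2 * R^2" using kk yk v i2 k2 i unfolding oo_def D_def by auto
      finally show "ip (D - 1) y c = 2 * R^2" .
    qed
  qed (use R in auto)
  then obtain f where f1: "\<forall>y\<in>Y. f y \<in> euc (D - 1 - length C)"
    and f2: "\<forall>y\<in>Y. \<forall>z\<in>Y. ip (D - 1 - length C) (f y) (f z)
           = ip (D - 1) y z - real (length C) * (2 * R^2)^2 / (2 * R^2 + real (length C) * (2 * R^2))"
    by blast
  have Dd: "D - 1 - length C = d" using \<alpha> lenC by (simp add: D_def)
  define \<kappa> where "\<kappa> = real (\<alpha> - 1) * (2 * R^2)^2 / (2 * R^2 + real (\<alpha> - 1) * (2 * R^2))"
  define \<rho>0 where "\<rho>0 = sqrt (2 * R^2 * (real \<alpha> + 1) / real \<alpha>)"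
  have r0: "\<rho>0 > 0" using R \<alpha> by (simp add: \<rho>0_def)
  have r2: "\<rho>0 * \<rho>0 = 2 * R^2 * (real \<alpha> + 1) / real \<alpha>" using R \<alpha> by (simp add: \<rho>0_def)
  define P where "P = (\<lambda>v i. f (g (dif (yc v))) i / \<rho>0)"
  have "\<forall>v\<in>VG. P v \<in> euc d \<and> (\<forall>w\<in>VG. ip d (P v) (P w)
      = 1 - dsq (d+\<alpha>) (yc v) (yc w) * real \<alpha> / (4 * R^2 * (real \<alpha> + 1)))"
  proof (intro ballI conjI)
    fix v assume v: "v \<in> VG"
    have yv: "g (dif (yc v)) \<in> Y" using v by (simp add: Y_def)
    then show "P v \<in> euc d" using f1 Dd by (auto simp: P_def euc_def)
    fix w assume w: "w \<in> VG"
    have yw: "g (dif (yc w)) \<in> Y" using w by (simp add: Y_def)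
    have "ip d (P v) (P w) = ip d (f (g (dif (yc v)))) (f (g (dif (yc w)))) / (\<rho>0 * \<rho>0)"
      by (simp add: P_def ip_lin)
    also have "ip d (f (g (dif (yc v)))) (f (g (dif (yc w)))) = ip D (dif (yc v)) (dif (yc w)) - \<kappa>"
      using f2 yv yw Dd gip ycD v w lenC by (simp add: \<kappa>_def)
    also have "ip D (dif (yc v)) (dif (yc w)) = (dsq D (yc v) oo + dsq D (yc w) oo - dsq D (yc v) (yc w)) / 2"
      unfolding dif_def by (rule polar)
    also have "\<dots> = 4 * R^2 - dsq D (yc v) (yc w) / 2" using yk v w k2 unfolding oo_def D_def by auto
    finally show "ip d (P v) (P w) = 1 - dsq (d+\<alpha>) (yc v) (yc w) * real \<alpha> / (4 * R^2 * (real \<alpha> + 1))"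
      unfolding r2 \<kappa>_def using embed_alg[OF \<alpha> R] by (simp add: D_def)
  qed
  then show ?thesis by blast
qed

lemma theta_bounds:
  fixes \<alpha> :: nat assumes "\<alpha> \<ge> 1"
  shows "0 < arccos (1 / (real \<alpha> + 1))" "arccos (1 / (real \<alpha> + 1)) < pi"
    "0 < 1 / (real \<alpha> + 1)" "1 / (real \<alpha> + 1) < 1"
proof -
  have a: "real \<alpha> \<ge> 1" using assms by simp
  show p: "0 < 1 / (real \<alpha> + 1)" by simp
  show q: "1 / (real \<alpha> + 1) < 1" using a by (simp add: field_simps)
  have "-1 < 1 / (real \<alpha> + 1)" using p by linarith
  from arccos_lt_bounded[OF this q] show "0 < arccos (1 / (real \<alpha> + 1))" "arccos (1 / (real \<alpha> + 1)) < pi"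
    by auto
qed

lemma points_to_code:
  fixes d \<alpha> :: nat and G :: "'a graph" and P :: "'a \<Rightarrow> nat \<Rightarrow> real" and ds :: "'a \<Rightarrow> 'a \<Rightarrow> real"
  assumes \<alpha>: "\<alpha> \<ge> 1" and G: "finite_graph G" and R: "R > 0"
    and P: "\<forall>v\<in>fst G. P v \<in> euc d \<and> (\<forall>w\<in>fst G. ip d (P v) (P w) = 1 - ds v w * real \<alpha> / (4 * R^2 * (real \<alpha> + 1)))"
    and ds: "\<forall>v\<in>fst G. \<forall>w\<in>fst G. v \<noteq> w \<longrightarrow> ds v w \<ge> 4 * R^2 \<and> (snd G v w \<longleftrightarrow> ds v w = 4 * R^2)"
    and ds0: "\<forall>v\<in>fst G. ds v v = 0"
  shows "\<exists>X. spherical_code d (arccos (1 / (real \<alpha> + 1))) X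
            \<and> graph_iso G (min_dist_graph d (arccos (1 / (real \<alpha> + 1))) X)"
proof -
  define t where "t = 1 / (real \<alpha> + 1)"
  define \<theta> where "\<theta> = arccos t"
  have tb: "0 < \<theta>" "\<theta> < pi" "0 < t" "t < 1" using theta_bounds[OF \<alpha>] by (simp_all add: t_def \<theta>_def)
  have A: "real \<alpha> > 0" using \<alpha> by simp
  have unit: "\<And>v. v \<in> fst G \<Longrightarrow> ip d (P v) (P v) = 1" using P ds0 by simp
  have ipform: "\<And>v w. v \<in> fst G \<Longrightarrow> w \<in> fst G \<Longrightarrow> v \<noteq> w \<Longrightarrow>
      ip d (P v) (P w) \<le> t \<and> (snd G v w \<longleftrightarrow> ip d (P v) (P w) = t)"
  proof -
    fix v w assume vw: "v \<in> fst G" "w \<in> fst G" "v \<noteq> w"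
    define K where "K = real \<alpha> / (4 * R^2 * (real \<alpha> + 1))"
    have K0: "K > 0" using A R by (simp add: K_def)
    have e: "ip d (P v) (P w) = 1 - ds v w * K" using P vw by (simp add: K_def)
    have R2: "R^2 > 0" using R by simp
    have kk: "K = (real \<alpha> / (real \<alpha> + 1)) / (4 * R^2)" unfolding K_def by (simp add: divide_divide_eq_left mult.commute)
    have k4: "4 * R^2 * K = real \<alpha> / (real \<alpha> + 1)" unfolding kk using R2 by simp
    have t': "t = 1 - 4 * R^2 * K" unfolding k4 t_def by (simp add: field_simps)
    have "ds v w \<ge> 4 * R^2" using ds vw by blast
    then have "ds v w * K \<ge> 4 * R^2 * K" using K0 by (simp add: mult_right_mono)
    moreover have "snd G v w \<longleftrightarrow> ds v w = 4 * R^2" using ds vw by blast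
    moreover have "ds v w * K = 4 * R^2 * K \<longleftrightarrow> ds v w = 4 * R^2" using K0 by simp
    ultimately show "ip d (P v) (P w) \<le> t \<and> (snd G v w \<longleftrightarrow> ip d (P v) (P w) = t)"
      unfolding e t' by linarith
  qed
  have lb: "\<And>v w. v \<in> fst G \<Longrightarrow> w \<in> fst G \<Longrightarrow> -1 \<le> ip d (P v) (P w) \<and> ip d (P v) (P w) \<le> 1"
  proof -
    fix v w assume "v \<in> fst G" "w \<in> fst G"
    then have "\<bar>ip d (P v) (P w)\<bar> \<le> 1" using cs_abs[of d "P v" "P w"] unit by simp
    then show "-1 \<le> ip d (P v) (P w) \<and> ip d (P v) (P w) \<le> 1" by linarith
  qed
  have inj: "inj_on P (fst G)"
  proof (rule inj_onI, rule ccontr)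
    fix v w assume "v \<in> fst G" "w \<in> fst G" "P v = P w" "v \<noteq> w"
    then show False using ipform[of v w] unit[of v] tb by simp
  qed
  define X where "X = P ` fst G"
  have fin: "finite (fst G)" using G by (simp add: finite_graph_def)
  have code: "spherical_code d \<theta> X"
    unfolding spherical_code_def
  proof (intro conjI ballI impI)
    show "0 < \<theta>" "\<theta> < pi" using tb by simp_all
    show "finite X" using fin by (simp add: X_def)
    show "X \<subseteq> unit_sphere d" using P unit by (auto simp: X_def unit_sphere_def enorm_def)
    fix x y assume "x \<in> X" "y \<in> X" "x \<noteq> y"
    then obtain v w where vw: "v \<in> fst G" "w \<in> fst G" "x = P v" "y = P w" "v \<noteq> w" by (auto simp: X_def)
    have "arccos t \<le> arccos (ip d x y)"
      using arccos_le_arccos[of "ip d x y" t] ipform[OF vw(1,2,5)] lb[OF vw(1,2)] tb vw by simp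
    then show "\<theta> \<le> sph_dist d x y" by (simp add: sph_dist_def \<theta>_def)
  qed
  have iso: "graph_iso G (min_dist_graph d \<theta> X)"
    unfolding graph_iso_def
  proof (intro exI conjI ballI)
    show "bij_betw P (fst G) (fst (min_dist_graph d \<theta> X))"
      using inj by (simp add: min_dist_graph_def X_def bij_betw_def)
    fix u v assume uv: "u \<in> fst G" "v \<in> fst G"
    show "snd G u v \<longleftrightarrow> snd (min_dist_graph d \<theta> X) (P u) (P v)"
    proof (cases "u = v")
      case True
      then show ?thesis using G by (simp add: finite_graph_def min_dist_graph_def)
    next
      case False
      have ne: "P u \<noteq> P v" using inj uv False by (simp add: inj_on_eq_iff)
      have "sph_dist d (P u) (P v) = \<theta> \<longleftrightarrow> ip d (P u) (P v) = t"
        unfolding sph_dist_def \<theta>_def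
        by (rule arccos_eq_iff) (use lb[OF uv] tb in auto)
      then show ?thesis using ipform[OF uv False] ne uv by (simp add: min_dist_graph_def X_def)
    qed
  qed
  show ?thesis using code iso by (auto simp: \<theta>_def t_def)
qed

lemma join_simps:
  "fst (graph_join (complete_graph k) G) = Inl ` {..<k} \<union> Inr ` fst G"
  "snd (graph_join (complete_graph k) G) (Inl i) (Inl j) \<longleftrightarrow> i < k \<and> j < k \<and> i \<noteq> j"
  "snd (graph_join (complete_graph k) G) (Inl i) (Inr v) \<longleftrightarrow> i < k \<and> v \<in> fst G"
  "snd (graph_join (complete_graph k) G) (Inr v) (Inl i) \<longleftrightarrow> i < k \<and> v \<in> fst G"
  "snd (graph_join (complete_graph k) G) (Inr v) (Inr w) \<longleftrightarrow> snd G v w"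
  by (auto simp: graph_join_def complete_graph_def)

lemma SS_alt: "SS D p = Sset D (fst p) (fst (snd p)) (snd (snd p))" by (cases p) (simp add: SS_def)
lemma SI_alt: "SI D p = Sint D (fst p) (fst (snd p)) (snd (snd p))" by (cases p) (simp add: SI_def)
lemma ND_alt: "ND D p = nondeg D (fst p) (fst (snd p)) (snd (snd p))" by (cases p) (simp add: ND_def)

lemma packing_config:
  assumes pack: "ball_packing D P" and bij: "bij_betw f V P"
    and iso: "\<forall>u\<in>V. \<forall>v\<in>V. adj u v \<longleftrightarrow> snd (tangency_graph P) (f u) (f v)"
  shows "\<exists>\<rho>. config D V adj \<rho>"
proof -
  have balls: "\<And>v. v \<in> V \<Longrightarrow> is_ball D (f v)" using pack bij by (auto simp: ball_packing_def bij_betw_def)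
  define \<rho> where "\<rho> = (\<lambda>v. SOME p. ND D p \<and> SS D p = f v)"
  have \<rho>: "\<And>v. v \<in> V \<Longrightarrow> ND D (\<rho> v) \<and> SS D (\<rho> v) = f v"
  proof -
    fix v assume "v \<in> V"
    then obtain a b c where "nondeg D a b c" "f v = Sset D a b c" using is_ball_params balls by metis
    then have "ND D (a,b,c) \<and> SS D (a,b,c) = f v" by (simp add: ND_def SS_def)
    then show "ND D (\<rho> v) \<and> SS D (\<rho> v) = f v" unfolding \<rho>_def by (rule someI)
  qed
  have SIi: "\<And>v. v \<in> V \<Longrightarrow> SI D (\<rho> v) = ext_interior D (f v)"
  proof -
    fix v assume v: "v \<in> V"
    have "nondeg D (fst (\<rho> v)) (fst (snd (\<rho> v))) (snd (snd (\<rho> v)))"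
      "Sset D (fst (\<rho> v)) (fst (snd (\<rho> v))) (snd (snd (\<rho> v))) = f v"
      using \<rho>[OF v] by (simp_all add: SS_alt ND_alt)
    then show "SI D (\<rho> v) = ext_interior D (f v)" using interior_Sset by (metis SI_alt)
  qed
  have "config D V adj \<rho>"
    unfolding config_def
  proof (intro conjI ballI impI)
    fix v assume "v \<in> V" then show "ND D (\<rho> v)" using \<rho> by simp
  next
    fix u v assume uv: "u \<in> V" "v \<in> V" "u \<noteq> v"
    have fne: "f u \<noteq> f v" using bij uv by (auto simp: bij_betw_def inj_on_eq_iff)
    then show "SS D (\<rho> u) \<noteq> SS D (\<rho> v)" using \<rho> uv by simp
    have "f u \<in> P" "f v \<in> P" using bij uv by (auto simp: bij_betw_def)
    then have "ext_interior D (f u) \<inter> ext_interior D (f v) = {}" using pack fne by (simp add: ball_packing_def)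
    then show "SI D (\<rho> u) \<inter> SI D (\<rho> v) = {}" using SIi uv by simp
    show "adj u v \<longleftrightarrow> (\<exists>!z. z \<in> SS D (\<rho> u) \<inter> SS D (\<rho> v))"
      using iso uv fne \<rho> \<open>f u \<in> P\<close> \<open>f v \<in> P\<close> by (simp add: tangency_graph_def)
  qed
  then show ?thesis by blast
qed

lemma config_facts:
  assumes "config D V adj \<rho>" "u \<in> V" "v \<in> V" "u \<noteq> v"
  shows "SI D (\<rho> u) \<inter> SI D (\<rho> v) = {}" "adj u v \<longleftrightarrow> (\<exists>!z. z \<in> SS D (\<rho> u) \<inter> SS D (\<rho> v))"
    "SS D (\<rho> u) \<noteq> SS D (\<rho> v)"
  using assms unfolding config_def by blast+

lemma lhs_to_rhs:
  fixes d \<alpha> :: nat and G :: "'a graph"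
  assumes d: "d \<ge> 1" and \<alpha>: "\<alpha> \<ge> 1" and G: "finite_graph G"
    and bp: "ball_packable (d + \<alpha>) (graph_join (complete_graph (2 + \<alpha>)) G)"
  shows "\<exists>X. spherical_code d (arccos (1 / (real \<alpha> + 1))) X
            \<and> graph_iso G (min_dist_graph d (arccos (1 / (real \<alpha> + 1))) X)"
proof -
  define D where "D = d + \<alpha>"
  define J where "J = graph_join (complete_graph (2 + \<alpha>)) G"
  define V where "V = fst J"
  define adj where "adj = snd J"
  have Vd: "V = Inl ` {..<2+\<alpha>} \<union> Inr ` fst G" by (simp add: V_def J_def join_simps)
  have adjs: "\<And>i j. adj (Inl i) (Inl j) \<longleftrightarrow> i < 2+\<alpha> \<and> j < 2+\<alpha> \<and> i \<noteq> j"
    "\<And>i v. adj (Inl i) (Inr v) \<longleftrightarrow> i < 2+\<alpha> \<and> v \<in> fst G"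
    "\<And>i v. adj (Inr v) (Inl i) \<longleftrightarrow> i < 2+\<alpha> \<and> v \<in> fst G"
    "\<And>v w. adj (Inr v) (Inr w) \<longleftrightarrow> snd G v w"
    by (simp_all add: adj_def J_def join_simps)
  obtain P f where pack: "ball_packing D P" and iso: "graph_iso J (tangency_graph P)"
    using bp by (auto simp: ball_packable_def D_def J_def)
  obtain f where bij: "bij_betw f V (fst (tangency_graph P))"
    and fiso: "\<forall>u\<in>V. \<forall>v\<in>V. adj u v \<longleftrightarrow> snd (tangency_graph P) (f u) (f v)"
    using iso by (auto simp: graph_iso_def V_def adj_def)
  have bij': "bij_betw f V P" using bij by (simp add: tangency_graph_def)
  obtain \<rho>0 where c0: "config D V adj \<rho>0" using packing_config[OF pack bij' fiso] by blast
  define u0 where "u0 = (Inl 0 :: nat + 'a)"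
  define u1 where "u1 = (Inl 1 :: nat + 'a)"
  have u: "u0 \<in> V" "u1 \<in> V" "u0 \<noteq> u1" "adj u0 u1" by (simp_all add: Vd u0_def u1_def adjs)
  obtain \<rho> where c: "config D V adj \<rho>" and ss: "SS D (\<rho> u0) \<inter> SS D (\<rho> u1) = {None}"
    using normalize[OF c0 u] by blast
  have ND: "\<And>v. v \<in> V \<Longrightarrow> ND D (\<rho> v)" using c by (simp add: config_def)
  obtain n s0 s1 where n: "n \<in> euc D" "ip D n n = 1" "s1 < s0"
    and h0: "SS D (\<rho> u0) = hs D n s0" "SI D (\<rho> u0) = ohs D n s0"
    and h1: "SS D (\<rho> u1) = hs D (\<lambda>i. - n i) (- s1)" "SI D (\<rho> u1) = ohs D (\<lambda>i. - n i) (- s1)"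
    using slab[of D "fst (\<rho> u0)" "fst (snd (\<rho> u0))" "snd (snd (\<rho> u0))"
                  "fst (\<rho> u1)" "fst (snd (\<rho> u1))" "snd (snd (\<rho> u1))"]
      ND[OF u(1)] ND[OF u(2)] config_facts(1)[OF c u(1-3)] ss
    unfolding SS_alt SI_alt ND_alt by metis
  define W where "W = V - {u0, u1}"
  define R where "R = (s0 - s1) / 2"
  define m where "m = (s0 + s1) / 2"
  have R0: "R > 0" using n by (simp add: R_def)
  have adjW: "\<And>w. w \<in> W \<Longrightarrow> adj w u0 \<and> adj w u1"
    using \<alpha> by (auto simp: W_def Vd u0_def u1_def adjs)
  have ex_ctr: "\<And>w. w \<in> W \<Longrightarrow> \<exists>ctr. ctr \<in> euc D \<and> ip D n ctr = m \<and> SS D (\<rho> w) = cball D ctr R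
       \<and> SI D (\<rho> w) = oball D ctr R"
  proof -
    fix w assume w: "w \<in> W"
    then have wV: "w \<in> V" "w \<noteq> u0" "w \<noteq> u1" by (auto simp: W_def)
    have d0: "SI D (\<rho> w) \<inter> ohs D n s0 = {}" using config_facts(1)[OF c wV(1) u(1) wV(2)] h0 by simp
    have d1: "SI D (\<rho> w) \<inter> ohs D (\<lambda>i. - n i) (- s1) = {}" using config_facts(1)[OF c wV(1) u(2) wV(3)] h1 by simp
    have t0: "\<exists>!z. z \<in> SS D (\<rho> w) \<inter> hs D n s0" using config_facts(2)[OF c wV(1) u(1) wV(2)] h0 adjW[OF w] by simp
    have t1: "\<exists>!z. z \<in> SS D (\<rho> w) \<inter> hs D (\<lambda>i. - n i) (- s1)" using config_facts(2)[OF c wV(1) u(2) wV(3)] h1 adjW[OF w] by simp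
    show "\<exists>ctr. ctr \<in> euc D \<and> ip D n ctr = m \<and> SS D (\<rho> w) = cball D ctr R \<and> SI D (\<rho> w) = oball D ctr R"
      using slab_ball[OF n, of "fst (\<rho> w)" "fst (snd (\<rho> w))" "snd (snd (\<rho> w))"] ND[OF wV(1)] d0 d1 t0 t1
      by (simp add: SS_alt SI_alt ND_alt m_def R_def)
  qed
  define ctr where "ctr = (\<lambda>w. SOME c. c \<in> euc D \<and> ip D n c = m \<and> SS D (\<rho> w) = cball D c R \<and> SI D (\<rho> w) = oball D c R)"
  have ctr: "\<And>w. w \<in> W \<Longrightarrow> ctr w \<in> euc D \<and> ip D n (ctr w) = m \<and> SS D (\<rho> w) = cball D (ctr w) R \<and> SI D (\<rho> w) = oball D (ctr w) R"
  proof -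
    fix w assume "w \<in> W"
    from someI_ex[OF ex_ctr[OF this]] show "?thesis w" unfolding ctr_def .
  qed
  have pair: "\<And>w w'. w \<in> W \<Longrightarrow> w' \<in> W \<Longrightarrow> w \<noteq> w' \<Longrightarrow>
      dsq D (ctr w) (ctr w') \<ge> 4 * R^2 \<and> (adj w w' \<longleftrightarrow> dsq D (ctr w) (ctr w') = 4 * R^2)"
  proof -
    fix w w' assume ww: "w \<in> W" "w' \<in> W" "w \<noteq> w'"
    then have wV: "w \<in> V" "w' \<in> V" by (auto simp: W_def)
    have ge: "dsq D (ctr w) (ctr w') \<ge> 4 * R^2"
      using ball_ball_disj[of "ctr w" D "ctr w'" R] ctr[OF ww(1)] ctr[OF ww(2)] R0 config_facts(1)[OF c wV ww(3)] by simp
    moreover have "adj w w' \<longleftrightarrow> dsq D (ctr w) (ctr w') = 4 * R^2"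
      using ball_ball_tang[of "ctr w" D "ctr w'" R, OF _ _ R0 ge] ctr[OF ww(1)] ctr[OF ww(2)] config_facts(2)[OF c wV ww(3)]
      by simp
    ultimately show "dsq D (ctr w) (ctr w') \<ge> 4 * R^2 \<and> (adj w w' \<longleftrightarrow> dsq D (ctr w) (ctr w') = 4 * R^2)" by simp
  qed
  have KW: "\<And>i. i \<in> {2..<\<alpha>+2} \<Longrightarrow> Inl i \<in> W" by (auto simp: W_def Vd u0_def u1_def)
  have GW: "\<And>v. v \<in> fst G \<Longrightarrow> Inr v \<in> W" by (auto simp: W_def Vd u0_def u1_def)
  obtain Pt where Pt: "\<forall>v\<in>fst G. Pt v \<in> euc d \<and> (\<forall>w\<in>fst G. ip d (Pt v) (Pt w)
      = 1 - dsq (d+\<alpha>) (ctr (Inr v)) (ctr (Inr w)) * real \<alpha> / (4 * R^2 * (real \<alpha> + 1)))"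
  proof (rule exE[OF embed[OF \<alpha> R0, of n d "\<lambda>i. ctr (Inl i)" m "fst G" "\<lambda>v. ctr (Inr v)"]])
    show "n \<in> euc (d+\<alpha>)" "ip (d+\<alpha>) n n = 1" using n by (simp_all add: D_def)
    show "\<forall>i\<in>{2..<\<alpha>+2}. ctr (Inl i) \<in> euc (d+\<alpha>) \<and> ip (d+\<alpha>) n (ctr (Inl i)) = m"
      using ctr KW by (simp add: D_def)
    show "\<forall>v\<in>fst G. ctr (Inr v) \<in> euc (d+\<alpha>) \<and> ip (d+\<alpha>) n (ctr (Inr v)) = m"
      using ctr GW by (simp add: D_def)
    show "\<forall>i\<in>{2..<\<alpha>+2}. \<forall>j\<in>{2..<\<alpha>+2}. i \<noteq> j \<longrightarrow> dsq (d+\<alpha>) (ctr (Inl i)) (ctr (Inl j)) = 4 * R^2"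
    proof (intro ballI impI)
      fix i j assume ij: "i \<in> {2..<\<alpha>+2}" "j \<in> {2..<\<alpha>+2}" "i \<noteq> j"
      then have "adj (Inl i) (Inl j)" by (simp add: adjs)
      then show "dsq (d+\<alpha>) (ctr (Inl i)) (ctr (Inl j)) = 4 * R^2" using pair[OF KW KW] ij by (simp add: D_def)
    qed
    show "\<forall>v\<in>fst G. \<forall>i\<in>{2..<\<alpha>+2}. dsq (d+\<alpha>) (ctr (Inr v)) (ctr (Inl i)) = 4 * R^2"
    proof (intro ballI)
      fix v i assume vi: "v \<in> fst G" "i \<in> {2..<\<alpha>+2}"
      then have "adj (Inr v) (Inl i)" by (simp add: adjs)
      then show "dsq (d+\<alpha>) (ctr (Inr v)) (ctr (Inl i)) = 4 * R^2" using pair[OF GW KW] vi by (simp add: D_def)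
    qed
  qed
  show ?thesis
  proof (rule points_to_code[OF \<alpha> G R0 Pt])
    show "\<forall>v\<in>fst G. \<forall>w\<in>fst G. v \<noteq> w \<longrightarrow> 4 * R^2 \<le> dsq (d + \<alpha>) (ctr (Inr v)) (ctr (Inr w)) \<and>
       (snd G v w \<longleftrightarrow> dsq (d + \<alpha>) (ctr (Inr v)) (ctr (Inr w)) = 4 * R^2)"
      using pair[OF GW GW] by (simp add: adjs D_def)
    show "\<forall>v\<in>fst G. dsq (d + \<alpha>) (ctr (Inr v)) (ctr (Inr v)) = 0" by simp
  qed
qed

lemma hs_params:
  assumes m: "m \<in> euc D" "ip D m m = 1"
  shows "is_ball D (hs D m s) \<and> ext_interior D (hs D m s) = ohs D m s"
proof -
  have nd: "nondeg D 0 m (2 * s)" using m by (simp add: nondeg_def)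
  have en: "enorm D m = 1" using m by (simp add: enorm_def)
  have "(\<lambda>i. m i / enorm D m) = m" using en by simp
  then have e: "Sset D 0 m (2 * s) = hs D m s" "Sint D 0 m (2 * s) = ohs D m s"
    using half_form[OF nd] en by simp_all
  show ?thesis using params_is_ball[OF nd] interior_Sset[OF nd] unfolding e by simp
qed

lemma ball_params:
  assumes c: "c \<in> euc D" and R: "R > 0"
  shows "is_ball D (cball D c R) \<and> ext_interior D (cball D c R) = oball D c R"
proof -
  have nd: "nondeg D 1 c (ip D c c - R^2)" using c R by (simp add: nondeg_def)
  have r: "sqrt (ip D c c - 1 * (ip D c c - R^2)) / 1 = R" using R by simp
  have e: "Sset D 1 c (ip D c c - R^2) = cball D c R" "Sint D 1 c (ip D c c - R^2) = oball D c R"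
    using ball_form[OF nd] unfolding r by simp_all
  show ?thesis using params_is_ball[OF nd] interior_Sset[OF nd] unfolding e by simp
qed

lemma hs_hs:
  assumes m: "m \<in> euc D" "ip D m m = 1" and s: "s0 + s1 > 0"
  shows "ohs D m s0 \<inter> ohs D (\<lambda>i. - m i) s1 = {} \<and> (\<exists>!z. z \<in> hs D m s0 \<inter> hs D (\<lambda>i. - m i) s1)"
proof -
  have "ohs D m s0 \<inter> ohs D (\<lambda>i. - m i) s1 = {}" using s by (auto simp: ohs_def ip_lin)
  moreover have "hs D m s0 \<inter> hs D (\<lambda>i. - m i) s1 = {None}" using s by (auto simp: hs_def ip_lin)
  ultimately show ?thesis by simp
qed

lemma ball_hs:
  assumes m: "m \<in> euc D" "ip D m m = 1" and c: "c \<in> euc D" and R: "R > 0" and e: "ip D m c + R = s"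
  shows "oball D c R \<inter> ohs D m s = {} \<and> (\<exists>!z. z \<in> cball D c R \<inter> hs D m s)"
proof -
  have bnd: "\<And>x. ip D m x \<le> ip D m c + enorm D (\<lambda>i. x i - c i)"
  proof -
    fix x
    have "ip D m (\<lambda>i. x i - c i) \<le> enorm D m * enorm D (\<lambda>i. x i - c i)" by (rule cs_enorm)
    then show "ip D m x \<le> ip D m c + enorm D (\<lambda>i. x i - c i)" using m by (simp add: ip_lin enorm_def)
  qed
  have "oball D c R \<inter> ohs D m s = {}"
  proof (rule ccontr)
    assume "oball D c R \<inter> ohs D m s \<noteq> {}"
    then obtain x where x: "dsq D x c < R^2" "ip D m x > s" by (auto simp: oball_def ohs_def)
    have "sqrt (dsq D x c) < sqrt (R^2)" using x(1) by (rule real_sqrt_less_mono)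
    then have "enorm D (\<lambda>i. x i - c i) < R"
      using R unfolding dsq_def enorm_def by simp
    then show False using bnd[of x] x e by simp
  qed
  moreover have "\<exists>!z. z \<in> cball D c R \<inter> hs D m s"
  proof -
    define p where "p = (\<lambda>i. c i + R * m i)"
    have pe: "p \<in> euc D" using c m by (auto simp: p_def euc_def)
    have "dsq D p c = R^2" using m by (simp add: dsq_def p_def ip_lin power2_eq_square)
    moreover have "ip D m p = s" using m e by (simp add: p_def ip_lin)
    ultimately have pin: "Some p \<in> cball D c R \<inter> hs D m s" using pe by (simp add: cball_def hs_def)
    have "\<forall>z\<in>cball D c R \<inter> hs D m s. z = Some p"
    proof
      fix z assume "z \<in> cball D c R \<inter> hs D m s"
      then obtain x where z: "z = Some x" and x: "x \<in> euc D" "dsq D x c \<le> R^2" "ip D m x \<ge> s"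
        by (auto simp: cball_def hs_def)
      have mx: "ip D m (\<lambda>i. x i - c i) \<ge> R" using x(3) e by (simp add: ip_lin)
      have "dsq D x p = dsq D x c - 2 * R * ip D m (\<lambda>i. x i - c i) + R^2"
      proof -
        have "(\<lambda>i. x i - p i) = (\<lambda>i. (x i - c i) - R * m i)" by (simp add: p_def algebra_simps)
        then show ?thesis using m unfolding dsq_def
          by (simp add: ip_lin ip_sym[of D m "\<lambda>i. x i - c i"] ip_sym[of D c m] ip_sym[of D x m] power2_eq_square algebra_simps)
      qed
      also have "\<dots> \<le> 0"
      proof -
        have "2 * R * ip D m (\<lambda>i. x i - c i) \<ge> 2 * R * R" using mx R by simp
        then show ?thesis using x(2) by (simp add: power2_eq_square)
      qed
      finally have "dsq D x p = 0" using dsq_nonneg[of D x p] by simp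
      moreover have "(\<lambda>i. x i - p i) \<in> euc D" using euc_diff[OF x(1) pe] .
      ultimately have "(\<lambda>i. x i - p i) = (\<lambda>i. 0)" using ip_self_eq0[of "\<lambda>i. x i - p i" D]
        unfolding dsq_def by blast
      then have "x = p" by (simp add: fun_eq_iff)
      then show "z = Some p" using z by simp
    qed
    then show ?thesis by (intro ex1I[of _ "Some p"] pin) simp
  qed
  ultimately show ?thesis by simp
qed

lemma ball_ball_disj2:
  assumes ge: "dsq D c1 c2 \<ge> 4 * R^2"
  shows "oball D c1 R \<inter> oball D c2 R = {}"
proof (rule ccontr)
  assume "oball D c1 R \<inter> oball D c2 R \<noteq> {}"
  then obtain x where x: "dsq D x c1 < R^2" "dsq D x c2 < R^2" by (auto simp: oball_def)
  have "dsq D c1 c2 / 2 \<le> dsq D x c1 + dsq D x c2"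
    using parallelogram[of D x c1 c2] dsq_nonneg[of D x] by simp
  then show False using x ge by simp
qed

lemma ohs_ne: "m \<in> euc D \<Longrightarrow> ip D m m = 1 \<Longrightarrow> ohs D m s \<noteq> {}"
proof -
  assume m: "m \<in> euc D" "ip D m m = 1"
  define x where "x = (\<lambda>i. (s + 1) * m i)"
  have "x \<in> euc D" "ip D m x > s" using m by (simp_all add: x_def euc_scale ip_lin)
  then show ?thesis by (auto simp: ohs_def)
qed

lemma oball_ne: "c \<in> euc D \<Longrightarrow> R > 0 \<Longrightarrow> oball D c R \<noteq> {}"
  by (auto simp: oball_def)

definition uv :: "nat \<Rightarrow> nat \<Rightarrow> nat \<Rightarrow> real" where
  "uv d \<alpha> = (\<lambda>j. if d \<le> j \<and> j < d + \<alpha> then 1 else 0)"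

lemma uv_euc: "uv d \<alpha> \<in> euc (d+\<alpha>)" by (auto simp: uv_def euc_def)
lemma ev_euc: "i < \<alpha> \<Longrightarrow> ev (d+i) \<in> euc (d+\<alpha>)" by (auto simp: ev_def euc_def)

lemma ip_uv_uv: "ip (d+\<alpha>) (uv d \<alpha>) (uv d \<alpha>) = real \<alpha>"
proof -
  have "ip (d+\<alpha>) (uv d \<alpha>) (uv d \<alpha>) = (\<Sum>j<d+\<alpha>. if d \<le> j then 1 else 0)"
    unfolding ip_def uv_def by (intro sum.cong) auto
  also have "\<dots> = card {j. j < d + \<alpha> \<and> d \<le> j}"
    by (simp add: sum.If_cases Int_def lessThan_def conj_commute)
  also have "{j. j < d + \<alpha> \<and> d \<le> j} = {d..<d+\<alpha>}" by auto
  finally show ?thesis by simp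
qed

lemma ip_uv_x: "x \<in> euc d \<Longrightarrow> ip (d+\<alpha>) (uv d \<alpha>) x = 0"
  unfolding ip_def uv_def euc_def by (intro sum.neutral) auto

lemma ip_uv_ev: "i < \<alpha> \<Longrightarrow> ip (d+\<alpha>) (uv d \<alpha>) (ev (d+i)) = 1"
  by (simp add: ip_ev_right uv_def)

lemma ip_ev_x: "x \<in> euc d \<Longrightarrow> ip (d+\<alpha>) (ev (d+i)) x = 0"
  by (simp add: ip_ev_left euc_def)

lemma ip_ev_ev: "i < \<alpha> \<Longrightarrow> j < \<alpha> \<Longrightarrow> ip (d+\<alpha>) (ev (d+i)) (ev (d+j)) = (if i = j then 1 else 0)"
  unfolding ip_ev_left by (simp add: ev_def)

lemma ip_x_z: "x \<in> euc d \<Longrightarrow> ip (d+\<alpha>) x z = ip d x z"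
  by (rule euc_ip_ext) auto

context
  fixes d \<alpha> :: nat
  assumes \<alpha>: "\<alpha> \<ge> 1"
begin

definition "sa = sqrt (real \<alpha>)"
definition "nv = (\<lambda>j. uv d \<alpha> j / sa)"
definition "\<sigma> = sqrt 2 / sa"
definition "cK i = (\<lambda>j. sqrt 2 * ev (d+i) j)"
definition "gv = (\<lambda>j. (sqrt 2 / real \<alpha>) * uv d \<alpha> j)"
definition "\<rho>0 = sqrt (2 * (real \<alpha> + 1) / real \<alpha>)"
definition "yv x = (\<lambda>j. gv j + \<rho>0 * x j)"

lemma sa_pos: "sa > 0" using \<alpha> by (simp add: sa_def)
lemma sa_sq: "sa * sa = real \<alpha>" by (simp add: sa_def)
lemma \<rho>0_sq: "\<rho>0 * \<rho>0 = 2 * (real \<alpha> + 1) / real \<alpha>" by (simp add: \<rho>0_def)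
lemma \<rho>0_pos: "\<rho>0 > 0" using \<alpha> by (simp add: \<rho>0_def)

lemma nv_euc: "nv \<in> euc (d+\<alpha>)" using uv_euc by (auto simp: nv_def euc_def)
lemma cK_euc: "i < \<alpha> \<Longrightarrow> cK i \<in> euc (d+\<alpha>)" using ev_euc by (auto simp: cK_def euc_def)
lemma yv_euc: "x \<in> euc d \<Longrightarrow> yv x \<in> euc (d+\<alpha>)" using uv_euc
  by (auto simp: yv_def gv_def euc_def)

lemma nv_nv: "ip (d+\<alpha>) nv nv = 1"
  using sa_sq sa_pos \<alpha> by (simp add: nv_def ip_lin ip_uv_uv)

lemma nv_cK: "i < \<alpha> \<Longrightarrow> ip (d+\<alpha>) nv (cK i) = \<sigma>"
  by (simp add: nv_def cK_def ip_lin ip_uv_ev \<sigma>_def)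

lemma nv_yv: "x \<in> euc d \<Longrightarrow> ip (d+\<alpha>) nv (yv x) = \<sigma>"
proof -
  assume x: "x \<in> euc d"
  have "ip (d+\<alpha>) nv (yv x) = sqrt 2 / real \<alpha> * real \<alpha> / sa"
    using x by (simp add: nv_def yv_def gv_def ip_lin ip_uv_uv ip_uv_x)
  also have "\<dots> = \<sigma>" using \<alpha> by (simp add: \<sigma>_def)
  finally show ?thesis .
qed

lemma cK_cK: "i < \<alpha> \<Longrightarrow> j < \<alpha> \<Longrightarrow> i \<noteq> j \<Longrightarrow> dsq (d+\<alpha>) (cK i) (cK j) = 4"
  by (simp add: dsq_expand cK_def ip_lin ip_ev_ev)

lemma yv_cK: "x \<in> euc d \<Longrightarrow> ip d x x = 1 \<Longrightarrow> i < \<alpha> \<Longrightarrow> dsq (d+\<alpha>) (yv x) (cK i) = 4"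
proof -
  assume x: "x \<in> euc d" "ip d x x = 1" and i: "i < \<alpha>"
  have a0: "real \<alpha> > 0" using \<alpha> by simp
  define c where "c = sqrt 2 / real \<alpha>"
  have g: "gv = (\<lambda>j. c * uv d \<alpha> j)" by (simp add: gv_def c_def)
  have gg: "ip (d+\<alpha>) gv gv = c * (c * real \<alpha>)" unfolding g by (simp only: ip_scale_left ip_scale_right ip_uv_uv)
  have gx: "ip (d+\<alpha>) gv x = 0" unfolding g using x by (simp add: ip_scale_left ip_uv_x)
  have xg: "ip (d+\<alpha>) x gv = 0" using gx by (simp add: ip_sym)
  have xx: "ip (d+\<alpha>) x x = 1" using x ip_x_z[of x d \<alpha> x] by simp
  have e1: "ip (d+\<alpha>) (yv x) (yv x) = 2 / real \<alpha> + \<rho>0 * \<rho>0"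
  proof -
    have "ip (d+\<alpha>) (yv x) (yv x) = ip (d+\<alpha>) gv gv + \<rho>0 * ip (d+\<alpha>) gv x + (\<rho>0 * ip (d+\<alpha>) x gv + \<rho>0 * (\<rho>0 * ip (d+\<alpha>) x x))"
      unfolding yv_def by (simp only: ip_add_left ip_add_right ip_scale_left ip_scale_right)
    also have "\<dots> = c * (c * real \<alpha>) + \<rho>0 * \<rho>0" unfolding gg gx xg xx by simp
    also have "c * (c * real \<alpha>) = 2 / real \<alpha>" using a0 by (simp add: c_def power2_eq_square[symmetric])
    finally show ?thesis .
  qed
  have e2: "ip (d+\<alpha>) (yv x) (cK i) = 2 / real \<alpha>"
  proof -
    have "ip (d+\<alpha>) (yv x) (cK i) = (sqrt 2 / real \<alpha>) * sqrt 2"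
      using x i by (simp add: yv_def gv_def cK_def ip_lin ip_uv_ev ip_sym[of _ x "ev (d+i)"] ip_ev_x)
    then show ?thesis by simp
  qed
  have e3: "ip (d+\<alpha>) (cK i) (cK i) = 2" using i by (simp add: cK_def ip_lin ip_ev_ev)
  show ?thesis unfolding dsq_expand e1 e2 e3 \<rho>0_sq using a0 by (simp add: field_simps)
qed

lemma yv_yv: "x \<in> euc d \<Longrightarrow> z \<in> euc d \<Longrightarrow> dsq (d+\<alpha>) (yv x) (yv z) = \<rho>0 * \<rho>0 * (ip d x x - 2 * ip d x z + ip d z z)"
proof -
  assume x: "x \<in> euc d" and z: "z \<in> euc d"
  have "(\<lambda>j. yv x j - yv z j) = (\<lambda>j. \<rho>0 * (x j - z j))" by (simp add: yv_def algebra_simps)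
  then have "dsq (d+\<alpha>) (yv x) (yv z) = \<rho>0 * (\<rho>0 * ip (d+\<alpha>) (\<lambda>j. x j - z j) (\<lambda>j. x j - z j))"
    unfolding dsq_def by (simp only: ip_scale_left ip_scale_right)
  also have "ip (d+\<alpha>) (\<lambda>j. x j - z j) (\<lambda>j. x j - z j) = ip d (\<lambda>j. x j - z j) (\<lambda>j. x j - z j)"
    using euc_diff[OF x z] by (rule ip_x_z)
  finally show ?thesis by (simp add: ip_diff_sq)
qed

end

lemma code_pair:
  fixes d \<alpha> :: nat
  assumes \<alpha>: "\<alpha> \<ge> 1" and code: "spherical_code d (arccos (1 / (real \<alpha> + 1))) X"
    and x: "x \<in> X" and z: "z \<in> X" and xz: "x \<noteq> z"
  shows "dsq (d+\<alpha>) (yv d \<alpha> x) (yv d \<alpha> z) \<ge> 4 \<and>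
    (dsq (d+\<alpha>) (yv d \<alpha> x) (yv d \<alpha> z) = 4 \<longleftrightarrow> sph_dist d x z = arccos (1 / (real \<alpha> + 1)))"
proof -
  define t where "t = 1 / (real \<alpha> + 1)"
  have tb: "0 < t" "t < 1" using theta_bounds[OF \<alpha>] by (simp_all add: t_def)
  have xs: "x \<in> euc d" "ip d x x = 1" "z \<in> euc d" "ip d z z = 1"
    using code x z by (auto simp: spherical_code_def unit_sphere_def enorm_def)
  have ab: "\<bar>ip d x z\<bar> \<le> 1" using cs_abs[of d x z] xs by simp
  have sd: "sph_dist d x z \<ge> arccos t" using code x z xz by (simp add: spherical_code_def t_def)
  then have le: "ip d x z \<le> t" using arccos_le_mono[of t "ip d x z"] ab tb by (simp add: sph_dist_def)
  have eq: "sph_dist d x z = arccos t \<longleftrightarrow> ip d x z = t"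
    unfolding sph_dist_def by (rule arccos_eq_iff) (use ab tb in simp)
  have D: "dsq (d+\<alpha>) (yv d \<alpha> x) (yv d \<alpha> z) = \<rho>0 \<alpha> * \<rho>0 \<alpha> * (2 - 2 * ip d x z)"
    using yv_yv[OF \<alpha> xs(1,3)] xs by simp
  have r: "\<rho>0 \<alpha> * \<rho>0 \<alpha> * (2 - 2 * t) = 4"
    using \<rho>0_sq[of \<alpha>] \<alpha> by (simp add: t_def field_simps)
  have rp: "\<rho>0 \<alpha> * \<rho>0 \<alpha> > 0" using \<rho>0_pos[OF \<alpha>] by simp
  have A: "\<rho>0 \<alpha> * \<rho>0 \<alpha> * (2 - 2 * ip d x z) \<ge> \<rho>0 \<alpha> * \<rho>0 \<alpha> * (2 - 2 * t)"
    using le rp by (intro mult_left_mono) auto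
  have iff: "\<rho>0 \<alpha> * \<rho>0 \<alpha> * (2 - 2 * ip d x z) = \<rho>0 \<alpha> * \<rho>0 \<alpha> * (2 - 2 * t) \<longleftrightarrow> ip d x z = t"
    using \<rho>0_pos[OF \<alpha>] by simp
  have A': "dsq (d+\<alpha>) (yv d \<alpha> x) (yv d \<alpha> z) \<ge> 4" using A unfolding D r .
  have B: "dsq (d+\<alpha>) (yv d \<alpha> x) (yv d \<alpha> z) = 4 \<longleftrightarrow> ip d x z = t" using iff unfolding D r .
  show ?thesis using A' B eq by (simp add: t_def)
qed

lemma rhs_to_lhs:
  fixes d \<alpha> :: nat and G :: "'a graph"
  assumes d: "d \<ge> 1" and \<alpha>: "\<alpha> \<ge> 1" and G: "finite_graph G"
    and code: "spherical_code d (arccos (1 / (real \<alpha> + 1))) X"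
    and iso: "graph_iso G (min_dist_graph d (arccos (1 / (real \<alpha> + 1))) X)"
  shows "ball_packable (d + \<alpha>) (graph_join (complete_graph (2 + \<alpha>)) G)"
proof -
  define \<theta> where "\<theta> = arccos (1 / (real \<alpha> + 1))"
  define D where "D = d + \<alpha>"
  define J where "J = graph_join (complete_graph (2 + \<alpha>)) G"
  define V where "V = fst J"
  define adj where "adj = snd J"
  have Vd: "V = Inl ` {..<2+\<alpha>} \<union> Inr ` fst G" by (simp add: V_def J_def join_simps)
  have adjs: "\<And>i j. adj (Inl i) (Inl j) \<longleftrightarrow> i < 2+\<alpha> \<and> j < 2+\<alpha> \<and> i \<noteq> j"
    "\<And>i v. adj (Inl i) (Inr v) \<longleftrightarrow> i < 2+\<alpha> \<and> v \<in> fst G"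
    "\<And>i v. adj (Inr v) (Inl i) \<longleftrightarrow> i < 2+\<alpha> \<and> v \<in> fst G"
    "\<And>v w. adj (Inr v) (Inr w) \<longleftrightarrow> snd G v w"
    by (simp_all add: adj_def J_def join_simps)
  obtain f where bijf: "bij_betw f (fst G) X"
    and fadj: "\<forall>u\<in>fst G. \<forall>v\<in>fst G. snd G u v \<longleftrightarrow> snd (min_dist_graph d \<theta> X) (f u) (f v)"
    using iso by (auto simp: graph_iso_def min_dist_graph_def \<theta>_def)
  have fX: "\<And>v. v \<in> fst G \<Longrightarrow> f v \<in> X" using bijf by (auto simp: bij_betw_def)
  have Xe: "\<And>x. x \<in> X \<Longrightarrow> x \<in> euc d \<and> ip d x x = 1"
    using code by (auto simp: spherical_code_def unit_sphere_def enorm_def)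
  define n where "n = nv d \<alpha>"
  define \<sigma>' where "\<sigma>' = \<sigma> \<alpha>"
  have ne: "n \<in> euc D" "ip D n n = 1" using nv_euc[OF \<alpha>] nv_nv[OF \<alpha>] by (simp_all add: n_def D_def)
  have mne: "(\<lambda>i. - n i) \<in> euc D" "ip D (\<lambda>i. - n i) (\<lambda>i. - n i) = 1" using ne by (simp_all add: euc_neg ip_lin)
  define isH where "isH = (\<lambda>w::nat + 'a. w = Inl 0 \<or> w = Inl 1)"
  define ctr where "ctr = (\<lambda>w::nat + 'a. case w of Inl i \<Rightarrow> cK d (i - 2) | Inr v \<Rightarrow> yv d \<alpha> (f v))"
  define hm where "hm = (\<lambda>w::nat + 'a. if w = Inl 0 then n else (\<lambda>i. - n i))"
  define hv where "hv = (\<lambda>w::nat + 'a. if w = Inl 0 then \<sigma>' + 1 else 1 - \<sigma>')"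
  define \<phi> where "\<phi> = (\<lambda>w. if isH w then hs D (hm w) (hv w) else cball D (ctr w) 1)"
  define I\<phi> where "I\<phi> = (\<lambda>w. if isH w then ohs D (hm w) (hv w) else oball D (ctr w) 1)"
  have hme: "\<And>w. hm w \<in> euc D \<and> ip D (hm w) (hm w) = 1" using ne mne by (simp add: hm_def)
  have F2: "\<And>w. w \<in> V \<Longrightarrow> \<not> isH w \<Longrightarrow> ctr w \<in> euc D \<and> ip D n (ctr w) = \<sigma>'"
  proof -
    fix w assume w: "w \<in> V" "\<not> isH w"
    show "ctr w \<in> euc D \<and> ip D n (ctr w) = \<sigma>'"
    proof (cases w)
      case (Inl i)
      then have "i - 2 < \<alpha>" using w by (auto simp: Vd isH_def)
      then show ?thesis using Inl cK_euc[OF \<alpha>] nv_cK[OF \<alpha>] by (simp add: ctr_def D_def n_def \<sigma>'_def)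
    next
      case (Inr v)
      then have "v \<in> fst G" using w by (auto simp: Vd)
      then have "f v \<in> euc d" using fX Xe by blast
      then show ?thesis using Inr yv_euc[OF \<alpha>] nv_yv[OF \<alpha>] by (simp add: ctr_def D_def n_def \<sigma>'_def)
    qed
  qed
  have F1: "\<And>w. w \<in> V \<Longrightarrow> is_ball D (\<phi> w) \<and> ext_interior D (\<phi> w) = I\<phi> w \<and> I\<phi> w \<noteq> {}"
  proof -
    fix w assume w: "w \<in> V"
    show "is_ball D (\<phi> w) \<and> ext_interior D (\<phi> w) = I\<phi> w \<and> I\<phi> w \<noteq> {}"
    proof (cases "isH w")
      case True
      then show ?thesis using hs_params[of "hm w" D "hv w"] ohs_ne[of "hm w" D "hv w"] hme[of w]
        by (simp add: \<phi>_def I\<phi>_def)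
    next
      case False
      then show ?thesis using ball_params[of "ctr w" D 1] oball_ne[of "ctr w" D 1] F2[OF w False]
        by (simp add: \<phi>_def I\<phi>_def)
    qed
  qed
  have F3: "\<And>w w'. w \<in> V \<Longrightarrow> w' \<in> V \<Longrightarrow> \<not> isH w \<Longrightarrow> \<not> isH w' \<Longrightarrow> w \<noteq> w' \<Longrightarrow>
      dsq D (ctr w) (ctr w') \<ge> 4 \<and> (adj w w' \<longleftrightarrow> dsq D (ctr w) (ctr w') = 4)"
  proof -
    fix w w' assume ww: "w \<in> V" "w' \<in> V" "\<not> isH w" "\<not> isH w'" "w \<noteq> w'"
    show "dsq D (ctr w) (ctr w') \<ge> 4 \<and> (adj w w' \<longleftrightarrow> dsq D (ctr w) (ctr w') = 4)"
    proof (cases w)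
      case (Inl i)
      then have i: "2 \<le> i" "i < 2 + \<alpha>" using ww by (auto simp: Vd isH_def)
      show ?thesis
      proof (cases w')
        case (Inl j)
        then have j: "2 \<le> j" "j < 2 + \<alpha>" "i \<noteq> j" using ww \<open>w = Inl i\<close> by (auto simp: Vd isH_def)
        have "dsq D (ctr w) (ctr w') = 4" using cK_cK[OF \<alpha>, of "i-2" "j-2" d] i j Inl \<open>w = Inl i\<close>
          by (simp add: ctr_def D_def)
        then show ?thesis using Inl \<open>w = Inl i\<close> i j by (simp add: adjs)
      next
        case (Inr v)
        then have v: "v \<in> fst G" using ww by (auto simp: Vd)
        have "dsq D (ctr w) (ctr w') = 4" using yv_cK[OF \<alpha>, of "f v" d "i-2"] Xe[OF fX[OF v]] i Inr \<open>w = Inl i\<close>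
          by (simp add: ctr_def D_def dsq_sym[of _ "cK d _"])
        then show ?thesis using Inr \<open>w = Inl i\<close> i v by (simp add: adjs)
      qed
    next
      case (Inr u)
      then have u: "u \<in> fst G" using ww by (auto simp: Vd)
      show ?thesis
      proof (cases w')
        case (Inl j)
        then have j: "2 \<le> j" "j < 2 + \<alpha>" using ww by (auto simp: Vd isH_def)
        have "dsq D (ctr w) (ctr w') = 4" using yv_cK[OF \<alpha>, of "f u" d "j-2"] Xe[OF fX[OF u]] j Inl \<open>w = Inr u\<close>
          by (simp add: ctr_def D_def)
        then show ?thesis using Inl \<open>w = Inr u\<close> j u by (simp add: adjs)
      next
        case (Inr v)
        then have v: "v \<in> fst G" and uv: "u \<noteq> v" using ww \<open>w = Inr u\<close> by (auto simp: Vd)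
        have fuv: "f u \<noteq> f v" using bijf u v uv by (auto simp: bij_betw_def inj_on_eq_iff)
        have "snd G u v \<longleftrightarrow> sph_dist d (f u) (f v) = \<theta>"
          using fadj u v fX fuv by (simp add: min_dist_graph_def)
        then show ?thesis using code_pair[OF \<alpha> code fX[OF u] fX[OF v] fuv] Inr \<open>w = Inr u\<close>
          by (simp add: ctr_def D_def adjs \<theta>_def)
      qed
    qed
  qed
  have F4: "\<And>w w'. w \<in> V \<Longrightarrow> w' \<in> V \<Longrightarrow> w \<noteq> w' \<Longrightarrow>
      I\<phi> w \<inter> I\<phi> w' = {} \<and> (adj w w' \<longleftrightarrow> (\<exists>!z. z \<in> \<phi> w \<inter> \<phi> w'))"
  proof -
    have HB: "\<And>w w'. w \<in> V \<Longrightarrow> w' \<in> V \<Longrightarrow> isH w \<Longrightarrow> \<not> isH w' \<Longrightarrow>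
      I\<phi> w \<inter> I\<phi> w' = {} \<and> adj w w' \<and> adj w' w \<and> (\<exists>!z. z \<in> \<phi> w \<inter> \<phi> w')"
    proof -
      fix w w' assume ww: "w \<in> V" "w' \<in> V" "isH w" "\<not> isH w'"
      have c: "ctr w' \<in> euc D" "ip D n (ctr w') = \<sigma>'" using F2 ww by auto
      have e: "ip D (hm w) (ctr w') + 1 = hv w" using c ww by (auto simp: hm_def hv_def isH_def ip_lin)
      have "oball D (ctr w') 1 \<inter> ohs D (hm w) (hv w) = {} \<and> (\<exists>!z. z \<in> cball D (ctr w') 1 \<inter> hs D (hm w) (hv w))"
        using ball_hs[of "hm w" D "ctr w'" 1 "hv w"] hme c e by simp
      moreover have "adj w w' \<and> adj w' w" using ww \<alpha> by (auto simp: Vd isH_def adjs)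
      ultimately show "I\<phi> w \<inter> I\<phi> w' = {} \<and> adj w w' \<and> adj w' w \<and> (\<exists>!z. z \<in> \<phi> w \<inter> \<phi> w')"
        using ww by (simp add: I\<phi>_def \<phi>_def Int_commute)
    qed
    fix w w' assume ww: "w \<in> V" "w' \<in> V" "w \<noteq> w'"
    consider "isH w" "isH w'" | "isH w" "\<not> isH w'" | "\<not> isH w" "isH w'" | "\<not> isH w" "\<not> isH w'" by blast
    then show "I\<phi> w \<inter> I\<phi> w' = {} \<and> (adj w w' \<longleftrightarrow> (\<exists>!z. z \<in> \<phi> w \<inter> \<phi> w'))"
    proof cases
      case 1
      have s: "(\<sigma>' + 1) + (1 - \<sigma>') > 0" by simp
      have hh: "ohs D n (\<sigma>' + 1) \<inter> ohs D (\<lambda>i. - n i) (1 - \<sigma>') = {} \<and> (\<exists>!z. z \<in> hs D n (\<sigma>' + 1) \<inter> hs D (\<lambda>i. - n i) (1 - \<sigma>'))"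
        by (rule hs_hs[OF ne s])
      have "adj w w'" using 1 ww \<alpha> by (auto simp: isH_def adjs)
      moreover have "(w = Inl 0 \<and> w' = Inl 1) \<or> (w = Inl 1 \<and> w' = Inl 0)" using 1 ww by (auto simp: isH_def)
      ultimately show ?thesis using hh by (auto simp: I\<phi>_def \<phi>_def isH_def hm_def hv_def Int_commute)
    next
      case 2 then show ?thesis using HB[OF ww(1,2)] by simp
    next
      case 3 then show ?thesis using HB[OF ww(2,1)] by (simp add: Int_commute)
    next
      case 4
      have c: "ctr w \<in> euc D" "ctr w' \<in> euc D" using F2 ww 4 by auto
      have g: "dsq D (ctr w) (ctr w') \<ge> 4 * 1^2" "adj w w' \<longleftrightarrow> dsq D (ctr w) (ctr w') = 4 * 1^2"
        using F3[OF ww(1,2) 4 ww(3)] by simp_all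
      show ?thesis using ball_ball_disj2[OF g(1)] ball_ball_tang[OF c _ g(1)] g(2) 4
        by (simp add: I\<phi>_def \<phi>_def)
    qed
  qed
  have inj: "inj_on \<phi> V"
  proof (rule inj_onI, rule ccontr)
    fix w w' assume ww: "w \<in> V" "w' \<in> V" "\<phi> w = \<phi> w'" "w \<noteq> w'"
    have "I\<phi> w = I\<phi> w'" using F1[OF ww(1)] F1[OF ww(2)] ww(3) by metis
    then show False using F4[OF ww(1,2,4)] F1[OF ww(1)] by simp
  qed
  define P where "P = \<phi> ` V"
  have pack: "ball_packing D P"
    unfolding ball_packing_def
  proof (intro conjI ballI impI)
    fix B assume "B \<in> P" then show "is_ball D B" using F1 by (auto simp: P_def)
  next
    fix B B' assume "B \<in> P" "B' \<in> P" "B \<noteq> B'"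
    then obtain w w' where "w \<in> V" "w' \<in> V" "B = \<phi> w" "B' = \<phi> w'" "w \<noteq> w'" by (auto simp: P_def)
    then show "ext_interior D B \<inter> ext_interior D B' = {}" using F1 F4 by simp
  qed
  have giso: "graph_iso J (tangency_graph P)"
    unfolding graph_iso_def
  proof (intro exI[of _ \<phi>] conjI ballI)
    show "bij_betw \<phi> (fst J) (fst (tangency_graph P))"
      using inj by (simp add: bij_betw_def P_def tangency_graph_def V_def)
    fix w w' assume ww: "w \<in> fst J" "w' \<in> fst J"
    show "snd J w w' \<longleftrightarrow> snd (tangency_graph P) (\<phi> w) (\<phi> w')"
    proof (cases "w = w'")
      case True
      have "\<not> adj w w"
      proof (cases w)
        case (Inl i) then show ?thesis by (simp add: adjs)
      next
        case (Inr v) then show ?thesis using G by (simp add: adjs finite_graph_def)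
      qed
      then show ?thesis using True by (simp add: adj_def tangency_graph_def)
    next
      case False
      have "\<phi> w \<noteq> \<phi> w'" using inj ww False by (simp add: V_def inj_on_eq_iff)
      then show ?thesis using F4[of w w'] ww False by (simp add: V_def adj_def tangency_graph_def P_def)
    qed
  qed
  show ?thesis unfolding ball_packable_def using pack giso by (auto simp: D_def J_def)
qed

theorem corollary3p6:
  fixes d \<alpha> :: nat and G :: "'a graph"
  assumes "d \<ge> 1" and "\<alpha> \<ge> 1" and "finite_graph G"
  shows "ball_packable (d + \<alpha>) (graph_join (complete_graph (2 + \<alpha>)) G)
     \<longleftrightarrow> (\<exists>X. spherical_code d (arccos (1 / (real \<alpha> + 1))) X
            \<and> graph_iso G (min_dist_graph d (arccos (1 / (real \<alpha> + 1))) X))"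
proof
  assume "ball_packable (d + \<alpha>) (graph_join (complete_graph (2 + \<alpha>)) G)"
  then show "\<exists>X. spherical_code d (arccos (1 / (real \<alpha> + 1))) X
            \<and> graph_iso G (min_dist_graph d (arccos (1 / (real \<alpha> + 1))) X)"
    using lhs_to_rhs[OF assms(1,2,3)] by blast
next
  assume "\<exists>X. spherical_code d (arccos (1 / (real \<alpha> + 1))) X
            \<and> graph_iso G (min_dist_graph d (arccos (1 / (real \<alpha> + 1))) X)"
  then show "ball_packable (d + \<alpha>) (graph_join (complete_graph (2 + \<alpha>)) G)"
    using rhs_to_lhs[OF assms(1,2,3)] by blast
qed

end
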